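(* Let $H$ be a definite Hamiltonian on $(a,b)$ in the limit circle case. Further, let $c>0$, set $r_0 := \bigl(\frac{c}{\det\Omega(a,b)}\bigr)^{\frac 12}$, let $(\hat t,\hat s)$ be the unique compatible pair for $H,r_0$ with constants $c,c$, and let $K_H(t;r)$ be the corresponding kernel. Then \[ \frac{\int_a^b\sqrt{\det H(t)}\,\mathrm{d}t}{\sqrt{c}}\log 2\cdot r-\Bigl(\log r+\log\frac{2\operatorname{tr}\Omega(a,b)}{\sqrt{c}}\Bigr) \le \int_{\hat t(r)}^b K_H(t;r)\,\mathrm{d}t \le \frac{4\sqrt{\det\Omega(a,b)}}{\sqrt{c}}\cdot r \] for $r>r_0$.
   Context: Let $-\infty<a<b\le\infty$. A Hamiltonian on $(a,b)$ is a measurable $H:(a,b)\to\mathbb{R}^{2\times 2}$, locally integrable on $(a,c)$ for $c<b$, with $H(t)\ge0$ a.e. and $\{H=0\}$ null; $H=\begin{pmatrix}h_1&h_3\\ h_3&h_2\end{pmatrix}$. It is in the limit circle case if $\int_a^b\operatorname{tr}H<\infty$, and definite if there is no $\phi$ with $H(t)=\operatorname{tr}H(t)\,\xi_\phi\xi_\phi^T$ a.e. on $(a,b)$, $\xi_\phi=(\cos\phi,\sin\phi)^T$. Set $\Omega(s,t)=\int_s^tH(u)\,\mathrm{d}u$, $\omega_j(s,t)=\int_s^th_j$. The unique compatible pair $(\hat t,\hat s)$ for $H,r_0$ with constants $c,c$ is given by $\det\Omega(a,\hat t(r))=\frac{c}{r^2}$ for $r>r_0$ and, for $t\ge\hat t(r)$,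 $\hat s(t;r)\le t$ with $\det\Omega(\hat s(t;r),t)=\frac{c}{r^2}$. Kernel: $K_H(t;r):=\mathbf{1}_{[a,\hat t(r))}(t)\frac{\omega_2(a,t)h_1(t)}{\frac{c}{r^2}+(\omega_3(a,t))^2}+\mathbf{1}_{[\hat t(r),b)}(t)\frac{h_1(t)}{\omega_1(\hat s(t;r),t)}$; in particular $K_H(t;r)=\frac{h_1(t)}{\omega_1(\hat s(t;r),t)}$ for $t\ge\hat t(r)$. *)

theory Defs
  imports "HOL-Analysis.Analysis"
begin

text \<open>The interval (a,b) with a real and b possibly infinite (b :: ereal).
  A Hamiltonian H = ((h1,h3),(h3,h2)) is given by its three entry functions.\<close>

definition ival :: "real \<Rightarrow> ereal \<Rightarrow> real set" where
  "ival a b = {t. a < t \<and> ereal t < b}"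

definition hamiltonian ::
  "real \<Rightarrow> ereal \<Rightarrow> (real \<Rightarrow> real) \<Rightarrow> (real \<Rightarrow> real) \<Rightarrow> (real \<Rightarrow> real) \<Rightarrow> bool" where
  "hamiltonian a b h1 h2 h3 \<longleftrightarrow>
     ereal a < b \<and>
     (\<forall>h\<in>{h1,h2,h3}. set_borel_measurable lborel (ival a b) h) \<and>
     (\<forall>c. a < c \<and> ereal c < b \<longrightarrow>
        (\<forall>h\<in>{h1,h2,h3}. set_integrable lborel {a<..<c} h)) \<and>
     (AE t in lborel. t \<in> ival a b \<longrightarrow>
        h1 t \<ge> 0 \<and> h2 t \<ge> 0 \<and> h1 t * h2 t - (h3 t)\<^sup>2 \<ge> 0) \<and>
     (AE t in lborel. t \<in> ival a b \<longrightarrow> \<not> (h1 t = 0 \<and> h2 t = 0 \<and> h3 t = 0))"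

definition limit_circle ::
  "real \<Rightarrow> ereal \<Rightarrow> (real \<Rightarrow> real) \<Rightarrow> (real \<Rightarrow> real) \<Rightarrow> bool" where
  "limit_circle a b h1 h2 \<longleftrightarrow> set_integrable lborel (ival a b) (\<lambda>t. h1 t + h2 t)"

definition definite ::
  "real \<Rightarrow> ereal \<Rightarrow> (real \<Rightarrow> real) \<Rightarrow> (real \<Rightarrow> real) \<Rightarrow> (real \<Rightarrow> real) \<Rightarrow> bool" where
  "definite a b h1 h2 h3 \<longleftrightarrow>
     \<not> (\<exists>\<phi>::real. AE t in lborel. t \<in> ival a b \<longrightarrow>
          h1 t = (h1 t + h2 t) * (cos \<phi>)\<^sup>2 \<and>
          h3 t = (h1 t + h2 t) * (cos \<phi> * sin \<phi>) \<and>
          h2 t = (h1 t + h2 t) * (sin \<phi>)\<^sup>2)"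

text \<open>\<omega>_j over a set S (S = [s,t] gives \<omega>_j(s,t), S = (a,b) gives \<omega>_j(a,b)).\<close>
definition omg :: "(real \<Rightarrow> real) \<Rightarrow> real set \<Rightarrow> real" where
  "omg h S = (LINT u:S|lborel. h u)"

definition detOmega ::
  "(real \<Rightarrow> real) \<Rightarrow> (real \<Rightarrow> real) \<Rightarrow> (real \<Rightarrow> real) \<Rightarrow> real set \<Rightarrow> real" where
  "detOmega h1 h2 h3 S = omg h1 S * omg h2 S - (omg h3 S)\<^sup>2"

definition trOmega :: "(real \<Rightarrow> real) \<Rightarrow> (real \<Rightarrow> real) \<Rightarrow> real set \<Rightarrow> real" where
  "trOmega h1 h2 S = omg h1 S + omg h2 S"

definition kernelH ::
  "real \<Rightarrow> ereal \<Rightarrow> (real \<Rightarrow> real) \<Rightarrow> (real \<Rightarrow> real) \<Rightarrow> (real \<Rightarrow> real) \<Rightarrow> real \<Rightarrow>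
   (real \<Rightarrow> real) \<Rightarrow> (real \<Rightarrow> real \<Rightarrow> real) \<Rightarrow> real \<Rightarrow> real \<Rightarrow> real" where
  "kernelH a b h1 h2 h3 c that shat t r =
     (if a \<le> t \<and> t < that r then
        omg h2 {a..t} * h1 t / (c / r\<^sup>2 + (omg h3 {a..t})\<^sup>2)
      else if that r \<le> t \<and> ereal t < b then
        h1 t / omg h1 {shat t r..t}
      else 0)"

end

theory Submission
  imports Defs
begin


lemma mixed_ineq:
  fixes p1 p2 p3 q1 q2 q3 :: real
  assumes p: "0 \<le> p1" "0 \<le> p2" "p3\<^sup>2 \<le> p1 * p2" and q: "0 \<le> q1" "0 \<le> q2" "q3\<^sup>2 \<le> q1 * q2"
  shows "2 * sqrt ((p1*p2 - p3\<^sup>2) * (q1*q2 - q3\<^sup>2)) \<le> p1*q2 + p2*q1 - 2*p3*q3"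
proof (cases "p1 = 0 \<or> q1 = 0")
  case True
  then show ?thesis
  proof
    assume "p1 = 0"
    then have "p3 = 0" using p by simp
    then show ?thesis using \<open>p1 = 0\<close> p q by simp
  next
    assume "q1 = 0"
    then have "q3 = 0" using q by simp
    then show ?thesis using \<open>q1 = 0\<close> p q by simp
  qed
next
  case False
  then have p1: "p1 > 0" and q1: "q1 > 0" using p q by auto
  define dP where "dP = p1*p2 - p3\<^sup>2"
  define dQ where "dQ = q1*q2 - q3\<^sup>2"
  have dP: "dP \<ge> 0" and dQ: "dQ \<ge> 0" using p q by (auto simp: dP_def dQ_def)
  have key: "p1*q1*(p1*q2 + p2*q1 - 2*p3*q3) = (p3*q1-p1*q3)\<^sup>2 + p1\<^sup>2*dQ + q1\<^sup>2*dP"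
    by (simp add: dP_def dQ_def power2_eq_square algebra_simps)
  have "(p1 * sqrt dQ - q1 * sqrt dP)\<^sup>2 \<ge> 0" by simp
  then have amgm: "p1*q1*(2* sqrt (dP*dQ)) \<le> p1\<^sup>2*dQ + q1\<^sup>2*dP"
    using dP dQ by (simp add: power2_eq_square algebra_simps real_sqrt_mult)
  have "p1*q1*(2* sqrt (dP*dQ)) \<le> p1*q1*(p1*q2 + p2*q1 - 2*p3*q3)"
    using key amgm zero_le_power2[of "p3*q1-p1*q3"] by linarith
  then show ?thesis using p1 q1 unfolding dP_def dQ_def
    by (simp add: mult_le_cancel_left_pos)
qed


lemma lint_pts:
  fixes f g :: "real \<Rightarrow> real"
  assumes "finite X" "\<And>x. x \<notin> X \<Longrightarrow> indicator A x * f x = indicator B x * g x"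
  shows "(LINT x:A|lborel. f x) = (LINT x:B|lborel. g x)"
  unfolding set_lebesgue_integral_def
  by (rule integral_discrete_difference[where X=X]) (use assms in \<open>auto intro: countable_finite\<close>)

lemma sint_pts:
  fixes f g :: "real \<Rightarrow> real"
  assumes "finite X" "\<And>x. x \<notin> X \<Longrightarrow> indicator A x * f x = indicator B x * g x"
  shows "set_integrable lborel A f \<longleftrightarrow> set_integrable lborel B g"
  unfolding set_integrable_def
  by (rule integrable_discrete_difference[where X=X]) (use assms in \<open>auto intro: countable_finite\<close>)

lemma int_sint: "integrable lborel (g::real\<Rightarrow>real) \<Longrightarrow> A \<in> sets borel \<Longrightarrow> set_integrable lborel A g"
  unfolding set_integrable_def by (intro integrable_mult_indicator) auto

lemma omg_Un:
  assumes "integrable lborel g" "A \<in> sets borel" "B \<in> sets borel" "A \<inter> B = {}"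
  shows "omg g (A \<union> B) = omg g A + omg g B"
  unfolding omg_def by (rule set_integral_Un) (use assms in \<open>auto intro: int_sint\<close>)

lemma omg_nn:
  assumes "AE x in lborel. 0 \<le> g x"
  shows "0 \<le> omg g A"
  unfolding omg_def set_lebesgue_integral_def
  by (intro integral_nonneg_AE) (use assms in \<open>auto split: split_indicator\<close>)

lemma omg_mono:
  assumes "integrable lborel g" "AE x in lborel. 0 \<le> g x" "A \<in> sets borel" "B \<in> sets borel" "A \<subseteq> B"
  shows "omg g A \<le> omg g B"
proof -
  have "B = A \<union> (B - A)" using assms by auto
  then have "omg g B = omg g A + omg g (B - A)"
    using omg_Un[of g A "B - A"] assms by auto
  moreover have "0 \<le> omg g (B - A)" using omg_nn assms by blast
  ultimately show ?thesis by simp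
qed

lemma omg_Ico_split:
  assumes "integrable lborel g" "x \<le> y" "y \<le> z"
  shows "omg g {x..<z} = omg g {x..<y} + omg g {y..<z}"
proof -
  have "{x..<z} = {x..<y} \<union> {y..<z}" using assms by auto
  moreover have "{x..<y} \<inter> {y..<z} = {}" by auto
  ultimately show ?thesis using omg_Un[of g "{x..<y}" "{y..<z}"] assms by simp
qed

lemma omg_Ici_split:
  assumes "integrable lborel g" "x \<le> y"
  shows "omg g {x..} = omg g {x..<y} + omg g {y..}"
proof -
  have "{x..} = {x..<y} \<union> {y..}" using assms by auto
  moreover have "{x..<y} \<inter> {y..} = {}" by auto
  ultimately show ?thesis using omg_Un[of g "{x..<y}" "{y..}"] assms by simp
qed



lemma isCont_C:
  fixes g :: "real \<Rightarrow> real"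
  assumes g: "integrable lborel g"
  shows "isCont (\<lambda>y. LINT x:{..<y}|lborel. g x) y0"
proof -
  have gm[measurable]: "g \<in> borel_measurable borel"
    using borel_measurable_integrable[OF g] by simp
  show ?thesis
    unfolding isCont_def tendsto_at_iff_sequentially comp_def
  proof (intro allI impI)
    fix X :: "nat \<Rightarrow> real" assume X: "X \<longlonglongrightarrow> y0"
    show "(\<lambda>n. LINT x:{..<X n}|lborel. g x) \<longlonglongrightarrow> (LINT x:{..<y0}|lborel. g x)"
      unfolding set_lebesgue_integral_def
    proof (rule integral_dominated_convergence[where w="\<lambda>x. norm (g x)"])
      show "integrable lborel (\<lambda>x. norm (g x))" using g by auto
      show "AE x in lborel. (\<lambda>n. indicator {..<X n} x *\<^sub>R g x) \<longlonglongrightarrow> indicator {..<y0} x *\<^sub>R g x"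
        using AE_lborel_singleton[of y0]
      proof eventually_elim
        case (elim x)
        show ?case
        proof (cases "x < y0")
          case True
          then have "eventually (\<lambda>n. x < X n) sequentially"
            using X by (simp add: order_tendstoD(1))
          then have "eventually (\<lambda>n. indicator {..<X n} x *\<^sub>R g x = indicator {..<y0} x *\<^sub>R g x) sequentially"
            by eventually_elim (simp add: True indicator_def)
          then show ?thesis by (rule tendsto_eventually)
        next
          case False
          then have "y0 < x" using elim by auto
          then have "eventually (\<lambda>n. X n < x) sequentially"
            using X by (simp add: order_tendstoD(2))
          then have "eventually (\<lambda>n. indicator {..<X n} x *\<^sub>R g x = indicator {..<y0} x *\<^sub>R g x) sequentially"
            by (rule eventually_mono) (use \<open>y0 < x\<close> in \<open>simp add: indicator_def\<close>)
          then show ?thesis by (rule tendsto_eventually)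
        qed
      qed
    next
      show "(\<lambda>x. indicator {..<y0} x *\<^sub>R g x) \<in> borel_measurable lborel" by measurable
    next
      fix i show "(\<lambda>x. indicator {..<X i} x *\<^sub>R g x) \<in> borel_measurable lborel" by measurable
    next
      fix i show "AE x in lborel. norm (indicator {..<X i} x *\<^sub>R g x) \<le> norm (g x)"
        by (intro AE_I2) (simp split: split_indicator)
    qed
  qed
qed

lemma omg_Ico_eq_C:
  fixes g :: "real \<Rightarrow> real"
  assumes g: "integrable lborel g" and "x \<le> y"
  shows "omg g {x..<y} = (LINT u:{..<y}|lborel. g u) - (LINT u:{..<x}|lborel. g u)"
proof -
  have d: "{..<x} \<inter> {x..<y} = {}" by auto
  have e: "{..<x} \<union> {x..<y} = {..<y}" using assms by auto
  have "(LINT u:{..<x} \<union> {x..<y}|lborel. g u) = (LINT u:{..<x}|lborel. g u) + omg g {x..<y}"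
    unfolding omg_def by (rule set_integral_Un[OF d]) (simp_all add: int_sint[OF g])
  then show ?thesis unfolding e by simp
qed

lemma cont_omg_Ico:
  fixes g :: "real \<Rightarrow> real"
  assumes g: "integrable lborel g"
  shows "continuous_on {x..} (\<lambda>y. omg g {x..<y})"
proof -
  have "continuous_on {x..} (\<lambda>y. (LINT u:{..<y}|lborel. g u) - (LINT u:{..<x}|lborel. g u))"
    by (intro continuous_at_imp_continuous_on ballI continuous_intros isCont_C g)
  then show ?thesis
    by (rule continuous_on_cong[THEN iffD1, rotated 2]) (auto simp: omg_Ico_eq_C g)
qed

lemma lim_omg_Ico:
  fixes g :: "real \<Rightarrow> real"
  assumes g: "integrable lborel g"
  shows "((\<lambda>y. omg g {x..<y}) \<longlongrightarrow> omg g {x..}) at_top"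
proof -
  have gx: "integrable lborel (\<lambda>u. indicator {x..} u *\<^sub>R g u)"
    using int_sint[OF g, of "{x..}"] by (simp add: set_integrable_def)
  have "((\<lambda>y. \<integral>u. indicator {..y} u *\<^sub>R (indicator {x..} u *\<^sub>R g u) \<partial>lborel) \<longlongrightarrow>
        \<integral>u. indicator {x..} u *\<^sub>R g u \<partial>lborel) at_top"
    by (rule tendsto_integral_at_top) (use gx in simp_all)
  moreover have "(\<integral>u. indicator {..y} u *\<^sub>R (indicator {x..} u *\<^sub>R g u) \<partial>lborel) = omg g {x..<y}" for y
    unfolding omg_def set_lebesgue_integral_def
    by (rule integral_discrete_difference[where X="{y}"]) (auto split: split_indicator)
  ultimately show ?thesis unfolding omg_def set_lebesgue_integral_def by simp
qed


lemma exp_neg_bound: "0 \<le> (z::real) \<Longrightarrow> exp (-z) \<le> 1 - z + z\<^sup>2/2"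
proof -
  assume z: "0 \<le> z"
  have e: "1 + z + z\<^sup>2/2 \<le> exp z" using exp_lower_Taylor_quadratic[OF z] .
  have p: "0 < 1 + z + z\<^sup>2/2" using z by (simp add: add_pos_nonneg)
  have "exp (-z) = 1 / exp z" by (simp add: exp_minus field_simps)
  also have "\<dots> \<le> 1 / (1 + z + z\<^sup>2/2)" using e p by (intro divide_left_mono) auto
  also have "\<dots> \<le> 1 - z + z\<^sup>2/2"
  proof -
    have "(1 - z + z\<^sup>2/2) * (1 + z + z\<^sup>2/2) = 1 + z^4/4"
      by (simp add: algebra_simps power2_eq_square power4_eq_xxxx)
    then have "1 \<le> (1 - z + z\<^sup>2/2) * (1 + z + z\<^sup>2/2)" by simp
    then show ?thesis using p by (simp add: divide_le_eq)
  qed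
  finally show ?thesis .
qed

locale nnf =
  fixes f :: "real \<Rightarrow> real"
  assumes f_int: "integrable lborel f"
    and f_nn: "AE x in lborel. 0 \<le> f x"
begin

lemma f_meas[measurable]: "f \<in> borel_measurable borel"
  using borel_measurable_integrable[OF f_int] by simp

definition Fi :: "real \<Rightarrow> real \<Rightarrow> real" where
  "Fi x y = omg f {x..<y}"

lemma Fi_nn: "0 \<le> Fi x y"
  unfolding Fi_def by (rule omg_nn[OF f_nn])

lemma Fi_split: "x \<le> y \<Longrightarrow> y \<le> z \<Longrightarrow> Fi x z = Fi x y + Fi y z"
  unfolding Fi_def by (rule omg_Ico_split[OF f_int])

lemma Fi_mono: "y \<le> y' \<Longrightarrow> Fi x y \<le> Fi x y'"
  unfolding Fi_def by (rule omg_mono[OF f_int f_nn]) auto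

lemma Fi_cont: "continuous_on {x..} (Fi x)"
  unfolding Fi_def using cont_omg_Ico[OF f_int] by simp

lemma Fi_self[simp]: "Fi x x = 0"
  unfolding Fi_def omg_def set_lebesgue_integral_def by simp

lemma Fi_meas[measurable]: "Fi x \<in> borel_measurable borel"
  by (rule borel_measurable_mono) (auto simp: mono_def Fi_mono)

lemma ivt_Fi:
  assumes "x \<le> y" "Fi x y \<ge> v" "v \<ge> 0"
  shows "\<exists>w. x \<le> w \<and> w \<le> y \<and> Fi x w = v"
proof -
  have "continuous_on {x..y} (Fi x)" using Fi_cont by (rule continuous_on_subset) auto
  then show ?thesis using IVT'[of "Fi x" x v y] assms by auto
qed

lemma ivt_Fi2:
  assumes "x \<le> z" "z \<le> y" "Fi x y \<ge> v" "v \<ge> Fi x z"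
  shows "\<exists>w. z \<le> w \<and> w \<le> y \<and> Fi x w = v"
proof -
  have "continuous_on {z..y} (Fi x)" using Fi_cont by (rule continuous_on_subset) (use assms in auto)
  then show ?thesis using IVT'[of "Fi x" z v y] assms by auto
qed

lemma sint_f: "A \<in> sets borel \<Longrightarrow> set_integrable lborel A f"
  by (rule int_sint[OF f_int])

lemma sint_div:
  assumes "c > 0" "A \<in> sets borel"
  shows "set_integrable lborel A (\<lambda>u. f u / (c + Fi x u))"
proof (rule set_integrable_bound[where f="\<lambda>u. f u / c"])
  show "set_integrable lborel A (\<lambda>u. f u / c)"
    using sint_f[OF assms(2)] by (simp add: set_integrable_def integrable_divide_zero)
  show "set_borel_measurable lborel A (\<lambda>u. f u / (c + Fi x u))"
    unfolding set_borel_measurable_def using assms by measurable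
  show "AE u in lborel. u \<in> A \<longrightarrow> norm (f u / (c + Fi x u)) \<le> norm (f u / c)"
  proof (intro AE_I2 impI)
    fix u
    have "0 \<le> Fi x u" by (rule Fi_nn)
    then show "norm (f u / (c + Fi x u)) \<le> norm (f u / c)"
      using assms by (simp add: abs_divide divide_left_mono)
  qed
qed

lemma sint_max:
  assumes "m > 0" "A \<in> sets borel"
  shows "set_integrable lborel A (\<lambda>u. f u / max (Fi x u) m)"
proof (rule set_integrable_bound[where f="\<lambda>u. f u / m"])
  show "set_integrable lborel A (\<lambda>u. f u / m)"
    using sint_f[OF assms(2)] by (simp add: set_integrable_def integrable_divide_zero)
  show "set_borel_measurable lborel A (\<lambda>u. f u / max (Fi x u) m)"
    unfolding set_borel_measurable_def using assms by measurable
  show "AE u in lborel. u \<in> A \<longrightarrow> norm (f u / max (Fi x u) m) \<le> norm (f u / m)"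
    using assms by (intro AE_I2 impI) (simp add: abs_divide divide_left_mono)
qed

lemma int_f_div_const: "(LINT u:A|lborel. f u / c) = omg f A / c"
  unfolding omg_def by simp

lemma ub1:
  assumes c: "c > 0" and xy: "x \<le> y"
  shows "(LINT u:{x..<y}|lborel. f u / (c + Fi x u)) \<le> Fi x y / c"
proof -
  have "(LINT u:{x..<y}|lborel. f u / (c + Fi x u)) \<le> (LINT u:{x..<y}|lborel. f u / c)"
  proof (rule set_integral_mono_AE)
    show "set_integrable lborel {x..<y} (\<lambda>u. f u / (c + Fi x u))" by (rule sint_div) (use c in auto)
    show "set_integrable lborel {x..<y} (\<lambda>u. f u / c)"
      using sint_f[of "{x..<y}"] by (simp add: set_integrable_def integrable_divide_zero)
    show "AE u\<in>{x..<y} in lborel. f u / (c + Fi x u) \<le> f u / c"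
      using f_nn
    proof eventually_elim
      case (elim u)
      have "0 \<le> Fi x u" by (rule Fi_nn)
      then show ?case using c elim by (intro impI divide_left_mono) auto
    qed
  qed
  also have "\<dots> = Fi x y / c" unfolding Fi_def by (rule int_f_div_const)
  finally show ?thesis .
qed

lemma lb_int_nn: "c > 0 \<Longrightarrow> 0 \<le> (LINT u:A|lborel. f u / (c + Fi x u))"
  unfolding set_lebesgue_integral_def
  by (intro integral_nonneg_AE) (use f_nn Fi_nn in \<open>auto split: split_indicator intro!: divide_nonneg_pos add_pos_nonneg elim!: eventually_mono\<close>)

lemma lbN:
  "\<forall>x y c q. c > 0 \<longrightarrow> x \<le> y \<longrightarrow> 1 \<le> q \<longrightarrow> c + Fi x y = c * q ^ N \<longrightarrow>
     real N * (1 - 1/q) \<le> (LINT u:{x..<y}|lborel. f u / (c + Fi x u))"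
proof (induction N)
  case 0
  then show ?case using lb_int_nn by simp
next
  case (Suc N)
  show ?case
  proof (intro allI impI)
    fix x y c q :: real
    assume c: "c > 0" and xy: "x \<le> y" and q: "1 \<le> q" and eq: "c + Fi x y = c * q ^ Suc N"
    have "q \<le> q ^ Suc N" using q by (metis power_one_right power_increasing le_add1 plus_1_eq_Suc)
    then have "c * q - c \<le> Fi x y" using eq c by (smt (verit) mult_left_mono)
    moreover have "0 \<le> c * q - c" using c q by simp
    ultimately obtain w where w: "x \<le> w" "w \<le> y" "Fi x w = c * q - c"
      using ivt_Fi[OF xy] by blast
    have cq: "c * q > 0" using c q by simp
    have d: "{x..<w} \<inter> {w..<y} = {}" by auto
    have e: "{x..<w} \<union> {w..<y} = {x..<y}" using w by auto
    have split: "(LINT u:{x..<y}|lborel. f u / (c + Fi x u)) =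
        (LINT u:{x..<w}|lborel. f u / (c + Fi x u)) + (LINT u:{w..<y}|lborel. f u / (c + Fi x u))"
      unfolding e[symmetric] by (rule set_integral_Un[OF d]) (use c in \<open>auto intro!: sint_div\<close>)
    have p1: "1 - 1/q \<le> (LINT u:{x..<w}|lborel. f u / (c + Fi x u))"
    proof -
      have "(LINT u:{x..<w}|lborel. f u / (c * q)) \<le> (LINT u:{x..<w}|lborel. f u / (c + Fi x u))"
      proof (rule set_integral_mono_AE)
        show "set_integrable lborel {x..<w} (\<lambda>u. f u / (c + Fi x u))" by (rule sint_div) (use c in auto)
        show "set_integrable lborel {x..<w} (\<lambda>u. f u / (c * q))"
          using sint_f[of "{x..<w}"] by (simp add: set_integrable_def integrable_divide_zero)
        show "AE u\<in>{x..<w} in lborel. f u / (c * q) \<le> f u / (c + Fi x u)"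
          using f_nn
        proof eventually_elim
          case (elim u)
          show ?case
          proof
            assume u: "u \<in> {x..<w}"
            have "Fi x u \<le> Fi x w" using u by (intro Fi_mono) auto
            then have "c + Fi x u \<le> c * q" using w by simp
            moreover have "0 < c + Fi x u" using c Fi_nn[of x u] by simp
            ultimately show "f u / (c * q) \<le> f u / (c + Fi x u)"
              using elim by (intro divide_left_mono) auto
          qed
        qed
      qed
      moreover have "(LINT u:{x..<w}|lborel. f u / (c * q)) = (c * q - c) / (c * q)"
        using int_f_div_const[of "{x..<w}" "c*q"] w(3) unfolding Fi_def by simp
      moreover have "(c * q - c) / (c * q) = 1 - 1/q" using c q by (simp add: field_simps)
      ultimately show ?thesis by simp
    qed
    have p2: "real N * (1 - 1/q) \<le> (LINT u:{w..<y}|lborel. f u / (c + Fi x u))"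
    proof -
      have "(LINT u:{w..<y}|lborel. f u / (c + Fi x u)) = (LINT u:{w..<y}|lborel. f u / (c * q + Fi w u))"
      proof (rule set_lebesgue_integral_cong)
        show "\<forall>u. u \<in> {w..<y} \<longrightarrow> f u / (c + Fi x u) = f u / (c * q + Fi w u)"
          using Fi_split[of x w] w by auto
      qed auto
      moreover have "c * q + Fi w y = (c * q) * q ^ N"
        using Fi_split[of x w y] w eq by (simp add: algebra_simps)
      ultimately show ?thesis using Suc.IH cq w q by simp
    qed
    show "real (Suc N) * (1 - 1/q) \<le> (LINT u:{x..<y}|lborel. f u / (c + Fi x u))"
      using split p1 p2 by (simp add: algebra_simps)
  qed
qed

lemma lb_log:
  assumes c: "c > 0" and xy: "x \<le> y"
  shows "ln ((c + Fi x y) / c) \<le> (LINT u:{x..<y}|lborel. f u / (c + Fi x u))"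
proof -
  define I where "I = (LINT u:{x..<y}|lborel. f u / (c + Fi x u))"
  define R where "R = (c + Fi x y) / c"
  define L where "L = ln R"
  have R1: "1 \<le> R" using c Fi_nn[of x y] by (simp add: R_def field_simps)
  then have L0: "0 \<le> L" by (simp add: L_def)
  have bound: "L - L\<^sup>2 / (2 * real N) \<le> I" if N: "N \<ge> 1" for N :: nat
  proof -
    define q where "q = exp (L / real N)"
    have q1: "1 \<le> q" using L0 N by (simp add: q_def)
    have "q ^ N = exp (real N * (L / real N))" by (simp only: q_def exp_of_nat_mult)
    also have "\<dots> = R" using N R1 by (simp add: L_def)
    finally have "c + Fi x y = c * q ^ N" using c by (simp add: R_def)
    then have "real N * (1 - 1/q) \<le> I" using lbN c xy q1 unfolding I_def by blast
    moreover have "1/q = exp (- (L / real N))" by (simp add: q_def exp_minus field_simps)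
    moreover have "exp (- (L / real N)) \<le> 1 - L / real N + (L / real N)\<^sup>2 / 2"
      using L0 by (intro exp_neg_bound) simp
    ultimately have "L / real N - (L / real N)\<^sup>2 / 2 \<le> 1 - 1/q" by linarith
    then have "real N * (L / real N - (L / real N)\<^sup>2 / 2) \<le> real N * (1 - 1/q)"
      by (rule mult_left_mono) simp
    then have "real N * (L / real N - (L / real N)\<^sup>2 / 2) \<le> I"
      using \<open>real N * (1 - 1/q) \<le> I\<close> by linarith
    moreover have "real N * (L / real N - (L / real N)\<^sup>2 / 2) = L - L\<^sup>2 / (2 * real N)"
      using N by (simp add: field_simps power2_eq_square)
    ultimately show ?thesis by simp
  qed
  show ?thesis
  proof (rule ccontr)
    assume "\<not> ln ((c + Fi x y) / c) \<le> (LINT u:{x..<y}|lborel. f u / (c + Fi x u))"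
    then have lt: "I < L" by (simp add: I_def L_def R_def)
    obtain N :: nat where N: "L\<^sup>2 / (2 * (L - I)) < real N" using reals_Archimedean2 by blast
    have N1: "N \<ge> 1"
    proof (rule ccontr)
      assume "\<not> N \<ge> 1" then have "N = 0" by simp
      moreover have "0 \<le> L\<^sup>2 / (2 * (L - I))" using lt by simp
      ultimately show False using N by simp
    qed
    have "L\<^sup>2 < real N * (2 * (L - I))" using N lt by (simp add: divide_less_eq mult.commute)
    then have h: "L\<^sup>2 < (L - I) * (2 * real N)" by (simp add: algebra_simps)
    have "0 < 2 * real N" using N1 by simp
    then have "L\<^sup>2 / (2 * real N) < L - I" using h by (simp only: pos_divide_less_eq)
    then show False using bound[OF N1] by simp
  qed
qed

lemma ub_max:
  assumes m: "m > 0" and xy: "x \<le> y"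
  shows "(LINT u:{x..<y}|lborel. f u / max (Fi x u) m) \<le> 2 * sqrt (max 1 (Fi x y / m))"
proof -
  define X where "X = Fi x y"
  have sq1: "1 \<le> sqrt (max 1 (Fi x y / m))" by simp
  show ?thesis
  proof (cases "X \<le> m")
    case True
    have "(LINT u:{x..<y}|lborel. f u / max (Fi x u) m) \<le> (LINT u:{x..<y}|lborel. f u / m)"
    proof (rule set_integral_mono_AE)
      show "set_integrable lborel {x..<y} (\<lambda>u. f u / max (Fi x u) m)" by (rule sint_max) (use m in auto)
      show "set_integrable lborel {x..<y} (\<lambda>u. f u / m)"
        using sint_f[of "{x..<y}"] by (simp add: set_integrable_def integrable_divide_zero)
      show "AE u\<in>{x..<y} in lborel. f u / max (Fi x u) m \<le> f u / m"
        using f_nn by eventually_elim (use m in \<open>auto intro!: divide_left_mono\<close>)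
    qed
    also have "\<dots> = X / m" unfolding X_def Fi_def by (rule int_f_div_const)
    also have "\<dots> \<le> 1" using True m by simp
    finally show ?thesis using sq1 by linarith
  next
    case False
    then have Xm: "m < X" by simp
    obtain w1 where w1: "x \<le> w1" "w1 \<le> y" "Fi x w1 = m"
      using ivt_Fi[OF xy, of m] Xm m unfolding X_def by auto
    define s where "s = sqrt (m * X)"
    have s_ge: "m \<le> s" unfolding s_def
      by (rule real_le_rsqrt) (use Xm m in \<open>simp add: power2_eq_square\<close>)
    have s_le: "s \<le> X" unfolding s_def
      by (rule real_le_lsqrt) (use Xm m in \<open>simp_all add: power2_eq_square\<close>)
    obtain w2 where w2: "w1 \<le> w2" "w2 \<le> y" "Fi x w2 = s"
      using ivt_Fi2[OF w1(1) w1(2), of s] s_ge s_le w1 unfolding X_def by auto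
    have sp: "s > 0" using s_ge m by simp
    have d1: "{x..<w1} \<inter> {w1..<y} = {}" and e1: "{x..<w1} \<union> {w1..<y} = {x..<y}" using w1 by auto
    have d2: "{w1..<w2} \<inter> {w2..<y} = {}" and e2: "{w1..<w2} \<union> {w2..<y} = {w1..<y}" using w2 by auto
    have sp1: "(LINT u:{x..<y}|lborel. f u / max (Fi x u) m) =
        (LINT u:{x..<w1}|lborel. f u / max (Fi x u) m) + (LINT u:{w1..<y}|lborel. f u / max (Fi x u) m)"
      unfolding e1[symmetric] by (rule set_integral_Un[OF d1]) (use m in \<open>auto intro!: sint_max\<close>)
    have sp2: "(LINT u:{w1..<y}|lborel. f u / max (Fi x u) m) =
        (LINT u:{w1..<w2}|lborel. f u / max (Fi x u) m) + (LINT u:{w2..<y}|lborel. f u / max (Fi x u) m)"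
      unfolding e2[symmetric] by (rule set_integral_Un[OF d2]) (use m in \<open>auto intro!: sint_max\<close>)
    have i1: "(LINT u:{x..<w1}|lborel. f u / max (Fi x u) m) \<le> 1"
    proof -
      have "(LINT u:{x..<w1}|lborel. f u / max (Fi x u) m) \<le> (LINT u:{x..<w1}|lborel. f u / m)"
      proof (rule set_integral_mono_AE)
        show "set_integrable lborel {x..<w1} (\<lambda>u. f u / max (Fi x u) m)" by (rule sint_max) (use m in auto)
        show "set_integrable lborel {x..<w1} (\<lambda>u. f u / m)"
          using sint_f[of "{x..<w1}"] by (simp add: set_integrable_def integrable_divide_zero)
        show "AE u\<in>{x..<w1} in lborel. f u / max (Fi x u) m \<le> f u / m"
          using f_nn by eventually_elim (use m in \<open>auto intro!: divide_left_mono\<close>)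
      qed
      also have "\<dots> = Fi x w1 / m" unfolding Fi_def by (rule int_f_div_const)
      finally show ?thesis using w1 m by simp
    qed
    have i2: "(LINT u:{w1..<w2}|lborel. f u / max (Fi x u) m) \<le> (s - m) / m"
    proof -
      have "(LINT u:{w1..<w2}|lborel. f u / max (Fi x u) m) = (LINT u:{w1..<w2}|lborel. f u / (m + Fi w1 u))"
      proof (rule set_lebesgue_integral_cong)
        show "\<forall>u. u \<in> {w1..<w2} \<longrightarrow> f u / max (Fi x u) m = f u / (m + Fi w1 u)"
        proof (intro allI impI)
          fix u assume u: "u \<in> {w1..<w2}"
          have "Fi x u = m + Fi w1 u" using Fi_split[of x w1 u] w1 u by simp
          moreover have "0 \<le> Fi w1 u" by (rule Fi_nn)
          ultimately show "f u / max (Fi x u) m = f u / (m + Fi w1 u)" by simp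
        qed
      qed auto
      also have "\<dots> \<le> Fi w1 w2 / m" by (rule ub1) (use m w2 in auto)
      also have "Fi w1 w2 = s - m" using Fi_split[of x w1 w2] w1 w2 by simp
      finally show ?thesis .
    qed
    have i3: "(LINT u:{w2..<y}|lborel. f u / max (Fi x u) m) \<le> (X - s) / s"
    proof -
      have "(LINT u:{w2..<y}|lborel. f u / max (Fi x u) m) = (LINT u:{w2..<y}|lborel. f u / (s + Fi w2 u))"
      proof (rule set_lebesgue_integral_cong)
        show "\<forall>u. u \<in> {w2..<y} \<longrightarrow> f u / max (Fi x u) m = f u / (s + Fi w2 u)"
        proof (intro allI impI)
          fix u assume u: "u \<in> {w2..<y}"
          have "Fi x u = s + Fi w2 u" using Fi_split[of x w2 u] w1 w2 u by simp
          moreover have "0 \<le> Fi w2 u" by (rule Fi_nn)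
          ultimately show "f u / max (Fi x u) m = f u / (s + Fi w2 u)" using s_ge by simp
        qed
      qed auto
      also have "\<dots> \<le> Fi w2 y / s" by (rule ub1) (use sp w2 in auto)
      also have "Fi w2 y = X - s" using Fi_split[of x w2 y] w1 w2 unfolding X_def by simp
      finally show ?thesis .
    qed
    have X0: "0 < X" using Xm m by simp
    have sm: "sqrt (X / m) * m = s"
    proof -
      have a1: "sqrt (X/m) * sqrt (m*m) = sqrt (X/m*(m*m))" by (rule real_sqrt_mult[symmetric])
      have a2: "sqrt (m*m) = m" using m by simp
      have a3: "X/m*(m*m) = m*X" using m by (simp add: field_simps)
      show ?thesis unfolding s_def using a1 a2 a3 by metis
    qed
    have sX: "sqrt (X / m) * s = X"
    proof -
      have a1: "sqrt (X/m) * sqrt (m*X) = sqrt (X/m*(m*X))" by (rule real_sqrt_mult[symmetric])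
      have a2: "sqrt (X*X) = X" using X0 by simp
      have a3: "X/m*(m*X) = X*X" using m by (simp add: field_simps)
      show ?thesis unfolding s_def using a1 a2 a3 by metis
    qed
    have r1: "(s - m) / m = sqrt (X / m) - 1"
      using m sm by (simp add: field_simps)
    have r2: "(X - s) / s = sqrt (X / m) - 1"
      using sp sX by (simp add: field_simps)
    have "max 1 (X / m) = X / m" using Xm m by simp
    then show ?thesis using sp1 sp2 i1 i2 i3 r1 r2 unfolding X_def by simp
  qed
qed

lemma ub_max_tail:
  assumes m: "m > 0"
  shows "(LINT u:{x..}|lborel. f u / max (Fi x u) m) \<le> 2 * sqrt (max 1 (omg f {x..} / m))"
proof -
  define G where "G = (\<lambda>u. f u / max (Fi x u) m)"
  have Gi: "integrable lborel G"
    using sint_max[OF m, of UNIV x] unfolding G_def set_integrable_def by simp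
  have lim: "((\<lambda>y. omg G {x..<y}) \<longlongrightarrow> omg G {x..}) at_top"
    by (rule lim_omg_Ico[OF Gi])
  have ev: "eventually (\<lambda>y. omg G {x..<y} \<le> 2 * sqrt (max 1 (omg f {x..} / m))) at_top"
  proof (rule eventually_at_top_linorderI[of x])
    fix y assume y: "x \<le> y"
    have "omg G {x..<y} \<le> 2 * sqrt (max 1 (Fi x y / m))"
      unfolding G_def omg_def by (rule ub_max[OF m y])
    also have "Fi x y \<le> omg f {x..}" unfolding Fi_def by (rule omg_mono[OF f_int f_nn]) auto
    then have "Fi x y / m \<le> omg f {x..} / m"
      using m by (simp add: divide_right_mono)
    then have "max 1 (Fi x y / m) \<le> max 1 (omg f {x..} / m)" by simp
    then have "2 * sqrt (max 1 (Fi x y / m)) \<le> 2 * sqrt (max 1 (omg f {x..} / m))"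
      by simp
    finally show "omg G {x..<y} \<le> 2 * sqrt (max 1 (omg f {x..} / m))" .
  qed
  have "omg G {x..} \<le> 2 * sqrt (max 1 (omg f {x..} / m))"
    by (rule tendsto_upperbound[OF lim ev]) simp
  then show ?thesis unfolding G_def omg_def .
qed

end


lemma quad_nn:
  fixes p1 p2 p3 u v :: real
  assumes p: "0 \<le> p1" "0 \<le> p2" "p3\<^sup>2 \<le> p1 * p2"
  shows "0 \<le> p1 * u\<^sup>2 + 2 * p3 * u * v + p2 * v\<^sup>2"
proof (cases "p1 = 0")
  case True
  then have "p3 = 0" using p by simp
  then show ?thesis using True p by simp
next
  case False
  then have p1: "p1 > 0" using p by simp
  have "p1 * (p1 * u\<^sup>2 + 2 * p3 * u * v + p2 * v\<^sup>2) = (p1 * u + p3 * v)\<^sup>2 + (p1 * p2 - p3\<^sup>2) * v\<^sup>2"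
    by (simp add: algebra_simps power2_eq_square)
  also have "\<dots> \<ge> 0" using p by simp
  finally show ?thesis using p1 by (simp add: zero_le_mult_iff)
qed

lemma quad_psd:
  fixes a b c :: real
  assumes a: "0 \<le> a" and q: "\<And>u. 0 \<le> a * u\<^sup>2 + 2 * b * u + c"
  shows "b\<^sup>2 \<le> a * c"
proof (cases "a = 0")
  case True
  have "b = 0"
  proof (rule ccontr)
    assume b: "b \<noteq> 0"
    have "0 \<le> a * (-(c+1)/(2*b))\<^sup>2 + 2 * b * (-(c+1)/(2*b)) + c" by (rule q)
    then show False using True b by (simp add: field_simps)
  qed
  then show ?thesis using True by simp
next
  case False
  then have a: "a > 0" using a by simp
  have "0 \<le> a * (-b/a)\<^sup>2 + 2 * b * (-b/a) + c" by (rule q)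
  also have "a * (-b/a)\<^sup>2 + 2 * b * (-b/a) + c = c - b\<^sup>2/a"
    using a by (simp add: field_simps power2_eq_square)
  finally show ?thesis using a by (simp add: field_simps mult.commute)
qed

lemma schur_alg:
  fixes x1 x2 x3 y1 y2 y3 :: real
  assumes y: "0 \<le> y1" "0 \<le> y2" "y3\<^sup>2 \<le> y1 * y2" and x1: "0 \<le> x1"
  shows "(x1 + y1) * (x1 * x2 - x3\<^sup>2) \<le> x1 * ((x1 + y1) * (x2 + y2) - (x3 + y3)\<^sup>2)"
proof -
  have "x1 * ((x1 + y1) * (x2 + y2) - (x3 + y3)\<^sup>2) - (x1 + y1) * (x1 * x2 - x3\<^sup>2)
      = (y1 * x3\<^sup>2 + 2 * y3 * x3 * (-x1) + y2 * (-x1)\<^sup>2) + x1 * (y1 * y2 - y3\<^sup>2)"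
    by (simp add: algebra_simps power2_eq_square)
  moreover have "0 \<le> y1 * x3\<^sup>2 + 2 * y3 * x3 * (-x1) + y2 * (-x1)\<^sup>2" by (rule quad_nn[OF y])
  moreover have "0 \<le> x1 * (y1 * y2 - y3\<^sup>2)" using x1 y by simp
  ultimately show ?thesis by linarith
qed

lemma mixed_pos:
  fixes p1 p2 p3 q1 q2 q3 :: real
  assumes p: "0 \<le> p1" "0 \<le> p2" "p3\<^sup>2 < p1 * p2" and q: "0 \<le> q1" "0 \<le> q2" "q3\<^sup>2 \<le> q1 * q2"
    and qn: "0 < q1 + q2"
  shows "0 < p1*q2 + p2*q1 - 2*p3*q3"
proof -
  have p1: "p1 > 0" and p2: "p2 > 0" using p
    by (metis less_eq_real_def mult_zero_left zero_le_power2 not_le mult_zero_right)+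
  show ?thesis
  proof (cases "q1 = 0")
    case True
    then have "q3 = 0" "q2 > 0" using q qn by auto
    then show ?thesis using True p1 by simp
  next
    case False
    then have q1: "q1 > 0" using q by simp
    have key: "p1*q1*(p1*q2 + p2*q1 - 2*p3*q3) = (p3*q1-p1*q3)\<^sup>2 + p1\<^sup>2*(q1*q2 - q3\<^sup>2) + q1\<^sup>2*(p1*p2 - p3\<^sup>2)"
      by (simp add: power2_eq_square algebra_simps)
    have "0 < q1\<^sup>2*(p1*p2 - p3\<^sup>2)" using q1 p by simp
    moreover have "0 \<le> p1\<^sup>2*(q1*q2 - q3\<^sup>2)" using q by simp
    ultimately have "0 < p1*q1*(p1*q2 + p2*q1 - 2*p3*q3)" using key zero_le_power2[of "p3*q1-p1*q3"]
      by linarith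
    then show ?thesis by (rule zero_less_mult_pos) (use p1 q1 in simp)
  qed
qed

locale HS =
  fixes g1 g2 g3 :: "real \<Rightarrow> real"
  assumes i1: "integrable lborel g1" and i2: "integrable lborel g2" and i3: "integrable lborel g3"
    and psd: "AE x in lborel. 0 \<le> g1 x \<and> 0 \<le> g2 x \<and> (g3 x)\<^sup>2 \<le> g1 x * g2 x"
begin

abbreviation "w1 \<equiv> omg g1"
abbreviation "w2 \<equiv> omg g2"
abbreviation "w3 \<equiv> omg g3"
abbreviation "dO \<equiv> detOmega g1 g2 g3"

lemma g1_nn: "AE x in lborel. 0 \<le> g1 x" using psd by eventually_elim simp
lemma g2_nn: "AE x in lborel. 0 \<le> g2 x" using psd by eventually_elim simp

lemma w1_nn: "0 \<le> w1 S" by (rule omg_nn[OF g1_nn])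
lemma w2_nn: "0 \<le> w2 S" by (rule omg_nn[OF g2_nn])

lemma lin3:
  assumes S: "S \<in> sets borel"
  shows "omg (\<lambda>x. a * g1 x + b * g2 x + c * g3 x) S = a * w1 S + b * w2 S + c * w3 S"
proof -
  have s1: "set_integrable lborel S g1" "set_integrable lborel S g2" "set_integrable lborel S g3"
    using int_sint[OF i1 S] int_sint[OF i2 S] int_sint[OF i3 S] .
  then have "set_integrable lborel S (\<lambda>x. a * g1 x)" "set_integrable lborel S (\<lambda>x. b * g2 x)"
     "set_integrable lborel S (\<lambda>x. c * g3 x)"
    by (auto intro: set_integrable_mult_right)
  then have "(LINT x:S|lborel. a * g1 x + b * g2 x + c * g3 x) =
      (LINT x:S|lborel. a * g1 x + b * g2 x) + (LINT x:S|lborel. c * g3 x)"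
    by (intro set_integral_add(2) set_integral_add(1))
  also have "(LINT x:S|lborel. a * g1 x + b * g2 x) = (LINT x:S|lborel. a * g1 x) + (LINT x:S|lborel. b * g2 x)"
    using \<open>set_integrable lborel S (\<lambda>x. a * g1 x)\<close> \<open>set_integrable lborel S (\<lambda>x. b * g2 x)\<close>
    by (rule set_integral_add(2))
  finally show ?thesis unfolding omg_def by (simp add: set_integral_mult_right)
qed

lemma psdS:
  assumes S: "S \<in> sets borel"
  shows "(w3 S)\<^sup>2 \<le> w1 S * w2 S"
proof (rule quad_psd[OF w1_nn])
  fix u :: real
  have "0 \<le> omg (\<lambda>x. u\<^sup>2 * g1 x + 1 * g2 x + (2*u) * g3 x) S"
    by (rule omg_nn) (use psd in \<open>eventually_elim, use quad_nn[of "g1 _" "g2 _" "g3 _" u 1] in \<open>auto simp: algebra_simps\<close>\<close>)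
  also have "\<dots> = u\<^sup>2 * w1 S + 1 * w2 S + (2*u) * w3 S" by (rule lin3[OF S])
  finally show "0 \<le> w1 S * u\<^sup>2 + 2 * w3 S * u + w2 S" by (simp add: algebra_simps)
qed

lemma dO_nn: "S \<in> sets borel \<Longrightarrow> 0 \<le> dO S"
  using psdS unfolding detOmega_def by simp

lemma dO_Un:
  assumes S: "S \<in> sets borel" and T: "T \<in> sets borel" and d: "S \<inter> T = {}"
  shows "dO (S \<union> T) = dO S + dO T + (w1 S * w2 T + w2 S * w1 T - 2 * w3 S * w3 T)"
  unfolding detOmega_def using omg_Un[OF i1 S T d] omg_Un[OF i2 S T d] omg_Un[OF i3 S T d]
  by (simp add: algebra_simps power2_eq_square)

lemma mink:
  assumes S: "S \<in> sets borel" and T: "T \<in> sets borel" and d: "S \<inter> T = {}"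
  shows "sqrt (dO S) + sqrt (dO T) \<le> sqrt (dO (S \<union> T))"
proof -
  have m: "2 * sqrt (dO S * dO T) \<le> w1 S * w2 T + w2 S * w1 T - 2 * w3 S * w3 T"
    unfolding detOmega_def by (rule mixed_ineq) (use w1_nn w2_nn psdS S T in auto)
  have "(sqrt (dO S) + sqrt (dO T))\<^sup>2 = dO S + dO T + 2 * sqrt (dO S * dO T)"
    using dO_nn[OF S] dO_nn[OF T] by (simp add: power2_eq_square algebra_simps real_sqrt_mult)
  also have "\<dots> \<le> dO (S \<union> T)" using dO_Un[OF S T d] m by simp
  finally show ?thesis
    by (rule real_le_rsqrt)
qed

lemma dO_mono:
  assumes S: "S \<in> sets borel" and T: "T \<in> sets borel" and st: "S \<subseteq> T"
  shows "dO S \<le> dO T"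
proof -
  have e: "T = S \<union> (T - S)" using st by auto
  have "0 \<le> dO (T - S)" by (rule dO_nn) (use S T in auto)
  then have "sqrt (dO S) \<le> sqrt (dO S) + sqrt (dO (T - S))" by simp
  also have "\<dots> \<le> sqrt (dO (S \<union> (T - S)))" by (rule mink) (use S T in auto)
  finally show ?thesis using e by simp
qed

lemma dO_strict:
  assumes S: "S \<in> sets borel" and T: "T \<in> sets borel" and st: "S \<subseteq> T"
    and pos: "0 < dO S" and q: "0 < w1 (T - S) + w2 (T - S)"
  shows "dO S < dO T"
proof -
  have e: "T = S \<union> (T - S)" using st by auto
  have TS: "T - S \<in> sets borel" using S T by auto
  have "0 < w1 S * w2 (T - S) + w2 S * w1 (T - S) - 2 * w3 S * w3 (T - S)"
    by (rule mixed_pos) (use w1_nn w2_nn psdS[OF TS] pos q in \<open>auto simp: detOmega_def\<close>)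
  moreover have "0 \<le> dO (T - S)" by (rule dO_nn[OF TS])
  moreover have "dO T = dO S + dO (T - S) + (w1 S * w2 (T - S) + w2 S * w1 (T - S) - 2 * w3 S * w3 (T - S))"
    using dO_Un[OF S TS] e by (metis Diff_disjoint)
  ultimately show ?thesis by linarith
qed

lemma family:
  assumes "finite I" "\<And>i. i \<in> I \<Longrightarrow> A i \<in> sets borel"
    and "\<And>i j. i \<in> I \<Longrightarrow> j \<in> I \<Longrightarrow> i \<noteq> j \<Longrightarrow> A i \<inter> A j = {}"
  shows "(\<Sum>i\<in>I. sqrt (dO (A i))) \<le> sqrt (dO (\<Union>i\<in>I. A i))"
  using assms
proof (induction I rule: finite_induct)
  case empty
  then show ?case by (simp add: detOmega_def omg_def set_lebesgue_integral_def)
next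
  case (insert i I)
  have "(\<Sum>i\<in>insert i I. sqrt (dO (A i))) = sqrt (dO (A i)) + (\<Sum>i\<in>I. sqrt (dO (A i)))"
    using insert by simp
  also have "\<dots> \<le> sqrt (dO (A i)) + sqrt (dO (\<Union>i\<in>I. A i))"
    using insert by simp
  also have "\<dots> \<le> sqrt (dO (A i \<union> (\<Union>i\<in>I. A i)))"
    by (rule mink) (use insert in auto)
  finally show ?case by simp
qed

lemma schur:
  assumes S: "S \<in> sets borel" and T: "T \<in> sets borel" and st: "S \<subseteq> T"
  shows "dO S * w1 T \<le> w1 S * dO T"
proof -
  have e: "T = S \<union> (T - S)" using st by auto
  have TS: "T - S \<in> sets borel" using S T by auto
  have d: "S \<inter> (T - S) = {}" by auto
  have "(w1 S + w1 (T - S)) * (w1 S * w2 S - (w3 S)\<^sup>2) \<le>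
        w1 S * ((w1 S + w1 (T - S)) * (w2 S + w2 (T - S)) - (w3 S + w3 (T - S))\<^sup>2)"
    by (rule schur_alg) (use w1_nn w2_nn psdS[OF TS] in auto)
  moreover have "w1 T = w1 S + w1 (T - S)" "w2 T = w2 S + w2 (T - S)" "w3 T = w3 S + w3 (T - S)"
    using omg_Un[OF i1 S TS d] omg_Un[OF i2 S TS d] omg_Un[OF i3 S TS d] e by auto
  ultimately show ?thesis unfolding detOmega_def by (simp add: algebra_simps)
qed

definition phi :: "real \<Rightarrow> real" where "phi x = sqrt (g1 x * g2 x - (g3 x)\<^sup>2)"

lemma g_meas[measurable]: "g1 \<in> borel_measurable borel" "g2 \<in> borel_measurable borel" "g3 \<in> borel_measurable borel"
  using borel_measurable_integrable[OF i1] borel_measurable_integrable[OF i2]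
    borel_measurable_integrable[OF i3] by simp_all

lemma phi_meas[measurable]: "phi \<in> borel_measurable borel"
  unfolding phi_def by measurable

lemma phi_int: "integrable lborel phi"
proof (rule Bochner_Integration.integrable_bound[where f="\<lambda>x. (g1 x + g2 x) / 2"])
  show "integrable lborel (\<lambda>x. (g1 x + g2 x) / 2)" using i1 i2 by simp
  show "phi \<in> borel_measurable lborel" by simp
  show "AE x in lborel. norm (phi x) \<le> norm ((g1 x + g2 x) / 2)"
    using psd
  proof eventually_elim
    case (elim x)
    have id: "((g1 x + g2 x) / 2)\<^sup>2 - (g1 x * g2 x - (g3 x)\<^sup>2) = (g1 x - g2 x)\<^sup>2 / 4 + (g3 x)\<^sup>2"
      by (simp add: power2_eq_square field_simps)
    have "0 \<le> (g1 x - g2 x)\<^sup>2 / 4 + (g3 x)\<^sup>2" by simp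
    then have "g1 x * g2 x - (g3 x)\<^sup>2 \<le> ((g1 x + g2 x) / 2)\<^sup>2" using id by linarith
    then have "phi x \<le> (g1 x + g2 x) / 2" unfolding phi_def
      by (intro real_le_lsqrt) (use elim in auto)
    moreover have "0 \<le> phi x" unfolding phi_def using elim by simp
    ultimately show ?case using elim by simp
  qed
qed

lemma int_mink:
  assumes S: "S \<in> sets borel"
  shows "omg phi S \<le> sqrt (dO S)"
proof -
  define A where "A = omg phi S"
  define K where "K = w1 S + w2 S + 1"
  have K: "K > 0" using w1_nn[of S] w2_nn[of S] by (simp add: K_def)
  have bnd: "A\<^sup>2 \<le> dO S + e * K" if e: "0 < e" "e \<le> 1" and A0: "0 \<le> A" for e
  proof -
    define M1 where "M1 = w1 S + e"
    define M2 where "M2 = w2 S + e"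
    define M3 where "M3 = w3 S"
    define dM where "dM = M1 * M2 - M3\<^sup>2"
    have dM: "dM = dO S + e * (w1 S + w2 S) + e\<^sup>2"
      by (simp add: dM_def M1_def M2_def M3_def detOmega_def algebra_simps power2_eq_square)
    have dMp: "dM > 0" using dM dO_nn[OF S] w1_nn[of S] w2_nn[of S] e by (simp add: add_nonneg_pos)
    have M1: "0 \<le> M1" "0 \<le> M2" "M3\<^sup>2 \<le> M1 * M2" using dMp w1_nn[of S] w2_nn[of S] e
      by (auto simp: M1_def M2_def dM_def)
    have pw: "AE x in lborel. 2 * sqrt dM * phi x \<le> M1 * g2 x + M2 * g1 x - 2 * M3 * g3 x"
      using psd
    proof eventually_elim
      case (elim x)
      have "2 * sqrt (dM * (g1 x * g2 x - (g3 x)\<^sup>2)) \<le> M1 * g2 x + M2 * g1 x - 2 * M3 * g3 x"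
        unfolding dM_def by (rule mixed_ineq) (use M1 elim in auto)
      then show ?case by (simp add: phi_def real_sqrt_mult)
    qed
    have "omg (\<lambda>x. 2 * sqrt dM * phi x) S \<le> omg (\<lambda>x. M2 * g1 x + M1 * g2 x + (- 2 * M3) * g3 x) S"
      unfolding omg_def
    proof (rule set_integral_mono_AE)
      show "set_integrable lborel S (\<lambda>x. 2 * sqrt dM * phi x)"
        using int_sint[OF phi_int S] by (rule set_integrable_mult_right)
      show "set_integrable lborel S (\<lambda>x. M2 * g1 x + M1 * g2 x + - 2 * M3 * g3 x)"
        by (intro set_integral_add(1) set_integrable_mult_right int_sint[OF _ S] i1 i2 i3)
      show "AE x\<in>S in lborel. 2 * sqrt dM * phi x \<le> M2 * g1 x + M1 * g2 x + - 2 * M3 * g3 x"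
        using pw by eventually_elim (simp add: algebra_simps)
    qed
    also have "\<dots> = M2 * w1 S + M1 * w2 S + (- 2 * M3) * w3 S" by (rule lin3[OF S])
    also have "\<dots> = 2 * dO S + e * (w1 S + w2 S)"
      by (simp add: M1_def M2_def M3_def detOmega_def algebra_simps power2_eq_square)
    also have "\<dots> \<le> 2 * dM"
    proof -
      have "0 \<le> e * (w1 S + w2 S)" using e w1_nn[of S] w2_nn[of S] by simp
      moreover have "0 \<le> e\<^sup>2" by simp
      ultimately show ?thesis using dM by linarith
    qed
    finally have "2 * sqrt dM * A \<le> 2 * dM" unfolding A_def omg_def by simp
    then have "sqrt dM * A \<le> sqrt dM * sqrt dM" using dMp by simp
    moreover have "0 < sqrt dM" using dMp by simp
    ultimately have "A \<le> sqrt dM" by (meson mult_le_cancel_left_pos)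
    then have "A\<^sup>2 \<le> dM" using A0 by (metis power_mono real_sqrt_pow2 less_imp_le[OF dMp])
    also have "dM \<le> dO S + e * K" using dM e by (simp add: K_def power2_eq_square algebra_simps mult_left_le_one_le)
    finally show ?thesis .
  qed
  show ?thesis
  proof (cases "A \<le> 0")
    case True
    then show ?thesis using A_def real_sqrt_ge_zero[OF dO_nn[OF S]] by linarith
  next
    case False
    have "A\<^sup>2 \<le> dO S"
    proof (rule ccontr)
      assume c: "\<not> A\<^sup>2 \<le> dO S"
      define e where "e = min 1 ((A\<^sup>2 - dO S) / (2 * K))"
      have e0: "0 < e" "e \<le> 1" using c K by (auto simp: e_def)
      have "e * K \<le> (A\<^sup>2 - dO S) / (2 * K) * K" using K by (intro mult_right_mono) (auto simp: e_def)
      also have "\<dots> = (A\<^sup>2 - dO S) / 2" using K by simp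
      finally have "e * K < A\<^sup>2 - dO S" using c by simp
      then show False using bnd[OF e0] False by simp
    qed
    then show ?thesis unfolding A_def by (rule real_le_rsqrt)
  qed
qed

end


locale CH = HS +
  fixes a :: real and b :: ereal and \<delta> :: real and th :: real and sh :: "real \<Rightarrow> real"
  assumes ab: "ereal a < b"
    and zero_out: "\<And>x. \<not> (a < x \<and> ereal x < b) \<Longrightarrow> g1 x = 0 \<and> g2 x = 0 \<and> g3 x = 0"
    and posH: "AE x in lborel. a < x \<and> ereal x < b \<longrightarrow> 0 < g1 x + g2 x"
    and dpos: "0 < \<delta>"
    and th: "a < th" "ereal th < b" "dO {a..<th} = \<delta>"
    and sh: "\<And>t. th \<le> t \<Longrightarrow> ereal t < b \<Longrightarrow> a \<le> sh t \<and> sh t \<le> t \<and> dO {sh t..<t} = \<delta>"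
begin

definition dt :: "real \<Rightarrow> real \<Rightarrow> real" where "dt s t = dO {s..<t}"

lemma dt_nn: "0 \<le> dt s t" unfolding dt_def by (rule dO_nn) simp

lemma dt_self[simp]: "dt s s = 0" unfolding dt_def detOmega_def omg_def set_lebesgue_integral_def by simp

lemma dt_mono: "s' \<le> s \<Longrightarrow> t \<le> t' \<Longrightarrow> dt s t \<le> dt s' t'"
  unfolding dt_def by (rule dO_mono) auto

lemma posI:
  assumes s: "a \<le> s" "s < t" and tb: "ereal t \<le> b"
  shows "0 < w1 {s..<t} + w2 {s..<t}"
proof -
  have eq: "w1 {s..<t} + w2 {s..<t} = omg (\<lambda>x. 1 * g1 x + 1 * g2 x + 0 * g3 x) {s..<t}"
    by (subst lin3) auto
  have nn: "0 \<le> omg (\<lambda>x. 1 * g1 x + 1 * g2 x + 0 * g3 x) {s..<t}"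
    by (rule omg_nn) (use psd in \<open>eventually_elim, auto\<close>)
  have "omg (\<lambda>x. 1 * g1 x + 1 * g2 x + 0 * g3 x) {s..<t} \<noteq> 0"
  proof
    assume z: "omg (\<lambda>x. 1 * g1 x + 1 * g2 x + 0 * g3 x) {s..<t} = 0"
    have int: "integrable lborel (\<lambda>x. indicator {s..<t} x * (1 * g1 x + 1 * g2 x + 0 * g3 x))"
      using int_sint[of "\<lambda>x. 1 * g1 x + 1 * g2 x + 0 * g3 x" "{s..<t}"] i1 i2
      by (simp add: set_integrable_def)
    have "AE x in lborel. indicator {s..<t} x * (1 * g1 x + 1 * g2 x + 0 * g3 x) = 0"
      using z unfolding omg_def set_lebesgue_integral_def
    proof (subst integral_nonneg_eq_0_iff_AE[symmetric])
      show "AE x in lborel. 0 \<le> indicator {s..<t} x * (1 * g1 x + 1 * g2 x + 0 * g3 x)"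
        using psd by eventually_elim (simp split: split_indicator)
    qed (use int in auto)
    then have "AE x in lborel. x \<notin> {s<..<t}"
      using posH
    proof eventually_elim
      case (elim x)
      show ?case
      proof
        assume x: "x \<in> {s<..<t}"
        have "ereal x < ereal t" using x by simp
        then have "ereal x < b" using tb by (rule less_le_trans)
        then have "a < x \<and> ereal x < b" using s x by auto
        then have "0 < g1 x + g2 x" using elim by simp
        moreover have "g1 x + g2 x = 0" using elim x by (simp add: indicator_def)
        ultimately show False by simp
      qed
    qed
    then have "{s<..<t} \<in> null_sets lborel" by (subst AE_iff_null_sets) auto
    then have "emeasure lborel {s<..<t} = 0" by auto
    then show False using s by simp
  qed
  then show ?thesis using eq nn by simp
qed

lemma dt_strict:
  assumes "a \<le> s'" "s' \<le> s" "s \<le> t" "t \<le> t'" "ereal t' \<le> b" "s' < s \<or> t < t'" "0 < dt s t"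
  shows "dt s t < dt s' t'"
  unfolding dt_def
proof (rule dO_strict)
  show "{s..<t} \<subseteq> {s'..<t'}" using assms by auto
  show "0 < dO {s..<t}" using assms by (simp add: dt_def)
  show "0 < w1 ({s'..<t'} - {s..<t}) + w2 ({s'..<t'} - {s..<t})"
    using assms(6)
  proof
    assume lt: "s' < s"
    have "ereal s \<le> ereal t'" using assms by simp
    then have sb: "ereal s \<le> b" using assms(5) by (rule order_trans)
    have "0 < w1 {s'..<s} + w2 {s'..<s}"
      by (rule posI) (use assms lt sb in auto)
    moreover have "w1 {s'..<s} \<le> w1 ({s'..<t'} - {s..<t})" "w2 {s'..<s} \<le> w2 ({s'..<t'} - {s..<t})"
      using assms by (auto intro!: omg_mono i1 i2 g1_nn g2_nn)
    ultimately show ?thesis by simp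
  next
    assume lt: "t < t'"
    have "0 < w1 {t..<t'} + w2 {t..<t'}"
      by (rule posI) (use assms lt in \<open>auto intro: order_trans\<close>)
    moreover have "w1 {t..<t'} \<le> w1 ({s'..<t'} - {s..<t})" "w2 {t..<t'} \<le> w2 ({s'..<t'} - {s..<t})"
      using assms by (auto intro!: omg_mono i1 i2 g1_nn g2_nn)
    ultimately show ?thesis by simp
  qed
qed auto

lemma dt_cont: "continuous_on {s..} (dt s)"
proof -
  have "continuous_on {s..} (\<lambda>y. w1 {s..<y} * w2 {s..<y} - (w3 {s..<y})\<^sup>2)"
    by (intro continuous_intros cont_omg_Ico i1 i2 i3)
  then show ?thesis unfolding dt_def detOmega_def by simp
qed

lemma omg_beyond:
  assumes g0: "\<And>x. \<not> (ereal x < b) \<Longrightarrow> g x = 0" and gi: "integrable lborel g"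
    and u: "\<not> (ereal u < b)" "s \<le> u" "u \<le> y"
  shows "omg g {s..<y} = omg g {s..<u}"
proof -
  have "omg g {s..<y} = omg g {s..<u} + omg g {u..<y}" by (rule omg_Ico_split[OF gi]) (use u in auto)
  moreover have "omg g {u..<y} = 0"
  proof -
    have "omg g {u..<y} = omg (\<lambda>x. 0) {u..<y}" unfolding omg_def
    proof (rule set_lebesgue_integral_cong)
      show "\<forall>x. x \<in> {u..<y} \<longrightarrow> g x = 0"
        using u g0 by (auto intro!: g0 simp: not_less order_trans)
    qed auto
    then show ?thesis by (simp add: omg_def set_lebesgue_integral_def)
  qed
  ultimately show ?thesis by simp
qed

lemma dt_beyond:
  assumes u: "\<not> (ereal u < b)" "s \<le> u" "u \<le> y"
  shows "dt s y = dt s u"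
proof -
  have "\<And>x. \<not> (ereal x < b) \<Longrightarrow> g1 x = 0" "\<And>x. \<not> (ereal x < b) \<Longrightarrow> g2 x = 0"
      "\<And>x. \<not> (ereal x < b) \<Longrightarrow> g3 x = 0" using zero_out by auto
  then show ?thesis unfolding dt_def detOmega_def
    using omg_beyond[OF _ i1 u] omg_beyond[OF _ i2 u] omg_beyond[OF _ i3 u] by simp
qed

lemma dt_tail_lim: "((\<lambda>y. dt s y) \<longlongrightarrow> dO {s..}) at_top"
  unfolding dt_def detOmega_def
  by (intro tendsto_intros lim_omg_Ico i1 i2 i3)

definition ok :: "real \<Rightarrow> bool" where
  "ok s \<longleftrightarrow> (\<exists>t. s < t \<and> ereal t < b \<and> dt s t = \<delta>)"

definition tau :: "real \<Rightarrow> real" where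
  "tau s = (SOME t. s < t \<and> ereal t < b \<and> dt s t = \<delta>)"

lemma tau: "ok s \<Longrightarrow> s < tau s \<and> ereal (tau s) < b \<and> dt s (tau s) = \<delta>"
  unfolding ok_def tau_def by (rule someI_ex)

definition p :: "nat \<Rightarrow> real" where "p k = (tau ^^ k) a"

lemma p0[simp]: "p 0 = a" and pSuc: "p (Suc k) = tau (p k)"
  by (simp_all add: p_def)

definition good :: "nat \<Rightarrow> bool" where "good k \<longleftrightarrow> (\<forall>i<k. ok (p i))"

lemma good_step: "good k \<Longrightarrow> i < k \<Longrightarrow> p i < p (Suc i) \<and> ereal (p (Suc i)) < b \<and> dt (p i) (p (Suc i)) = \<delta>"
  unfolding good_def pSuc using tau by blast

lemma good_le: "good k \<Longrightarrow> i \<le> j \<Longrightarrow> j \<le> k \<Longrightarrow> p i \<le> p j"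
proof (induction j)
  case 0 then show ?case by simp
next
  case (Suc j)
  show ?case
  proof (cases "i = Suc j")
    case False
    then have "p i \<le> p j" using Suc by simp
    also have "p j \<le> p (Suc j)" using good_step[OF Suc(2), of j] Suc by simp
    finally show ?thesis .
  qed simp
qed

lemma good_a: "good k \<Longrightarrow> i \<le> k \<Longrightarrow> a \<le> p i"
  using good_le[of k 0 i] by simp

lemma good_b: "good k \<Longrightarrow> i \<le> k \<Longrightarrow> ereal (p i) < b"
  using good_step[of k "i - 1"] ab by (cases i) auto

lemma good_count:
  assumes g: "good k"
  shows "real k * sqrt \<delta> \<le> sqrt (dO UNIV)"
proof -
  have "(\<Sum>i\<in>{..<k}. sqrt (dO {p i..<p (Suc i)})) \<le> sqrt (dO (\<Union>i\<in>{..<k}. {p i..<p (Suc i)}))"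
  proof (rule family)
    fix i j assume ij: "i \<in> {..<k}" "j \<in> {..<k}" "i \<noteq> j"
    show "{p i..<p (Suc i)} \<inter> {p j..<p (Suc j)} = {}"
    proof (cases "i < j")
      case True
      then have "p (Suc i) \<le> p j" using good_le[OF g, of "Suc i" j] ij by simp
      then show ?thesis by auto
    next
      case False
      then have "p (Suc j) \<le> p i" using good_le[OF g, of "Suc j" i] ij by simp
      then show ?thesis by auto
    qed
  qed auto
  also have "\<dots> \<le> sqrt (dO UNIV)" by (simp add: dO_mono)
  finally have "(\<Sum>i\<in>{..<k}. sqrt (dO {p i..<p (Suc i)})) \<le> sqrt (dO UNIV)" .
  moreover have "(\<Sum>i\<in>{..<k}. sqrt (dO {p i..<p (Suc i)})) = real k * sqrt \<delta>"
    using good_step[OF g] by (simp add: dt_def)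
  ultimately show ?thesis by simp
qed

lemma good_bound: "good k \<Longrightarrow> k \<le> nat \<lceil>sqrt (dO UNIV) / sqrt \<delta>\<rceil>"
proof -
  assume g: "good k"
  have "real k \<le> sqrt (dO UNIV) / sqrt \<delta>" using good_count[OF g] dpos by (simp add: field_simps)
  then show ?thesis by linarith
qed

lemma ok_a: "ok a" unfolding ok_def dt_def using th by auto

lemma good1: "good 1" unfolding good_def using ok_a by simp

definition n :: nat where "n = (GREATEST k. good k)"

lemma good_n: "good n" unfolding n_def
  by (rule GreatestI_nat[where P=good and k=1]) (use good1 good_bound in auto)

lemma n_ge1: "1 \<le> n" unfolding n_def
  by (rule Greatest_le_nat[where P=good and k=1]) (use good1 good_bound in auto)

lemma not_ok_n: "\<not> ok (p n)"
proof
  assume "ok (p n)"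
  then have "good (Suc n)" using good_n by (auto simp: good_def less_Suc_eq)
  then have "Suc n \<le> n" unfolding n_def
    by (rule Greatest_le_nat[where P=good]) (use good_bound in auto)
  then show False by simp
qed

lemma p1: "p 1 = th"
proof -
  have t: "a < tau a" "ereal (tau a) < b" "dt a (tau a) = \<delta>" using tau[OF ok_a] by auto
  have th': "dt a th = \<delta>" using th by (simp add: dt_def)
  show ?thesis
  proof (rule ccontr)
    assume ne: "p 1 \<noteq> th"
    then have "tau a < th \<or> th < tau a" by (simp add: p_def) linarith
    then show False
    proof
      assume "tau a < th"
      then have "dt a (tau a) < dt a th" using t th dpos by (intro dt_strict) auto
      then show False using t th' by simp
    next
      assume "th < tau a"
      then have "dt a th < dt a (tau a)" using t th th' dpos by (intro dt_strict) auto
      then show False using t th' by simp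
    qed
  qed
qed

lemma sh_dt: "th \<le> t \<Longrightarrow> ereal t < b \<Longrightarrow> dt (sh t) t = \<delta>"
  using sh by (simp add: dt_def)

lemma sb1:
  assumes s: "a \<le> s" "ok s" and t: "th \<le> t" "ereal t < b" "tau s \<le> t"
  shows "s \<le> sh t"
proof (rule ccontr)
  assume "\<not> s \<le> sh t"
  then have lt: "sh t < s" by simp
  have ts: "s < tau s" "dt s (tau s) = \<delta>" using tau[OF s(2)] by auto
  have "dt s (tau s) < dt (sh t) t"
    by (rule dt_strict) (use sh[OF t(1,2)] lt ts t dpos in auto)
  then show False using ts sh_dt[OF t(1,2)] by simp
qed

lemma sb2:
  assumes s: "a \<le> s" "ok s" and t: "th \<le> t" "t \<le> tau s"
  shows "sh t \<le> s"
proof (rule ccontr)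
  assume "\<not> sh t \<le> s"
  then have lt: "s < sh t" by simp
  have ts: "s < tau s" "ereal (tau s) < b" "dt s (tau s) = \<delta>" using tau[OF s(2)] by auto
  have tb: "ereal t < b" using t ts by (meson ereal_less_eq(3) le_less_trans)
  have "dt (sh t) t < dt s (tau s)"
    by (rule dt_strict) (use sh[OF t(1) tb] lt ts t dpos sh_dt[OF t(1) tb] s in auto)
  then show False using ts sh_dt[OF t(1) tb] by simp
qed

lemma sb3:
  assumes y: "p n \<le> y"
  shows "dt (p n) y \<le> \<delta>"
proof (rule ccontr)
  assume "\<not> dt (p n) y \<le> \<delta>"
  then have gt: "\<delta> < dt (p n) y" by simp
  have "continuous_on {p n..y} (dt (p n))" using dt_cont by (rule continuous_on_subset) auto
  then obtain w where w: "p n \<le> w" "w \<le> y" "dt (p n) w = \<delta>"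
    using IVT'[of "dt (p n)" "p n" \<delta> y] gt y dpos by auto
  have "w \<noteq> p n" using w dpos by auto
  then have pw: "p n < w" using w by simp
  show False
  proof (cases "ereal w < b")
    case True
    then have "ok (p n)" using pw w unfolding ok_def by auto
    then show False using not_ok_n by simp
  next
    case False
    then have "dt (p n) y = dt (p n) w" using w by (intro dt_beyond) auto
    then show False using gt w by simp
  qed
qed

lemma sb4:
  assumes t: "th \<le> t" "ereal t < b" "p n \<le> t"
  shows "sh t \<le> p n"
proof (rule ccontr)
  assume "\<not> sh t \<le> p n"
  then have "p n \<le> sh t" by simp
  then have "dt (sh t) t \<le> dt (p n) t" by (intro dt_mono) auto
  also have "\<dots> < \<delta>"
  proof -
    have "dt (p n) t \<le> \<delta>" using sb3 t by simp
    moreover have "dt (p n) t \<noteq> \<delta>"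
    proof
      assume e: "dt (p n) t = \<delta>"
      have "t \<noteq> p n" using e dpos by auto
      then have "p n < t" using t by simp
      then have "ok (p n)" using e t unfolding ok_def by (intro exI[of _ t]) auto
      then show False using not_ok_n by simp
    qed
    ultimately show ?thesis by simp
  qed
  finally show False using sh_dt[OF t(1,2)] by simp
qed

lemma tail_le: "dO {p n..} \<le> \<delta>"
proof (rule tendsto_upperbound[OF dt_tail_lim])
  show "\<forall>\<^sub>F x in at_top. dt (p n) x \<le> \<delta>"
    by (rule eventually_at_top_linorderI[of "p n"]) (rule sb3)
qed simp

lemma sh_mono:
  assumes t: "th \<le> t" "t \<le> t'" "ereal t' < b"
  shows "sh t \<le> sh t'"
proof (rule ccontr)
  assume "\<not> sh t \<le> sh t'"
  then have lt: "sh t' < sh t" by simp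
  have tb: "ereal t < b" using t by (meson ereal_less_eq(3) le_less_trans)
  have t': "th \<le> t'" using t by simp
  have "dt (sh t) t < dt (sh t') t'"
    by (rule dt_strict) (use sh[OF t(1) tb] sh[OF t' t(3)] lt t dpos sh_dt[OF t(1) tb] in auto)
  then show False using sh_dt[OF t(1) tb] sh_dt[OF t' t(3)] by simp
qed

end


context CH begin

interpretation N1: nnf g1 by unfold_locales (rule i1, rule g1_nn)

lemma ereal_lt_b: "x \<le> y \<Longrightarrow> ereal y < b \<Longrightarrow> ereal x < b"
  by (meson ereal_less_eq(3) le_less_trans)

definition S0 :: "real set" where "S0 = {t. th \<le> t \<and> ereal t < b}"
definition K :: "real \<Rightarrow> real" where "K t = g1 t / w1 {sh t..<t}"

lemma lessb_meas[measurable]: "{t::real. ereal t < b} \<in> sets borel"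
proof -
  have "open {t::real. ereal t < b}"
    by (rule open_Collect_less) (auto intro: continuous_intros continuous_on_ereal)
  then show ?thesis by auto
qed

lemma S0_meas[measurable]: "S0 \<in> sets borel"
proof -
  have "S0 = {th..} \<inter> {t. ereal t < b}" by (auto simp: S0_def)
  then show ?thesis by simp
qed

lemma w1_pos: "S \<in> sets borel \<Longrightarrow> 0 < dO S \<Longrightarrow> 0 < w1 S"
proof -
  assume S: "S \<in> sets borel" and d: "0 < dO S"
  then have "0 < w1 S * w2 S" unfolding detOmega_def using zero_le_power2[of "w3 S"] by linarith
  then show ?thesis using w1_nn[of S] w2_nn[of S] by (simp add: zero_less_mult_iff)
qed

definition shx :: "real \<Rightarrow> real" where
  "shx t = (if ereal t < b then sh (max t th) else real_of_ereal b)"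

lemma shx_mono: "mono shx"
proof (rule monoI)
  fix t t' :: real assume tt: "t \<le> t'"
  show "shx t \<le> shx t'"
  proof (cases "ereal t' < b")
    case True
    then have "ereal t < b" using tt by (meson ereal_less_eq(3) le_less_trans)
    moreover have "ereal (max t' th) < b" using True th by (simp add: max_def)
    ultimately show ?thesis using True tt by (simp add: shx_def sh_mono)
  next
    case False
    then obtain B where B: "b = ereal B" using ab by (cases b) auto
    show ?thesis
    proof (cases "ereal t < b")
      case True
      have "ereal (max t th) < b" using True th by (simp add: max_def)
      then have "sh (max t th) \<le> B"
        using sh[of "max t th"] B by (simp add: max_def) (smt (verit))
      then show ?thesis unfolding shx_def using True False B by simp
    next
      case False
      then show ?thesis using \<open>\<not> ereal t' < b\<close> by (simp add: shx_def)
    qed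
  qed
qed

definition C1 :: "real \<Rightarrow> real" where "C1 y = (LINT x:{..<y}|lborel. g1 x)"

lemma C1_mono: "mono C1"
proof (rule monoI)
  fix x y :: real assume "x \<le> y"
  then have "C1 y = C1 x + w1 {x..<y}" using omg_Ico_eq_C[OF i1, of x y] by (simp add: C1_def)
  then show "C1 x \<le> C1 y" using w1_nn[of "{x..<y}"] by simp
qed

lemma K_meas: "set_borel_measurable lborel S0 K"
proof -
  have [measurable]: "shx \<in> borel_measurable borel" by (rule borel_measurable_mono[OF shx_mono])
  have [measurable]: "C1 \<in> borel_measurable borel" by (rule borel_measurable_mono[OF C1_mono])
  have meas: "(\<lambda>t. indicator S0 t *\<^sub>R (g1 t / (C1 t - C1 (shx t)))) \<in> borel_measurable lborel"
    by measurable
  have eq1: "indicator S0 t *\<^sub>R (g1 t / (C1 t - C1 (shx t))) = indicator S0 t *\<^sub>R K t" for t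
  proof (cases "t \<in> S0")
    case True
    then have t: "th \<le> t" "ereal t < b" by (auto simp: S0_def)
    then have "shx t = sh t" by (simp add: shx_def max_def)
    moreover have "C1 t - C1 (sh t) = w1 {sh t..<t}"
      using omg_Ico_eq_C[OF i1, of "sh t" t] sh[OF t] by (simp add: C1_def)
    ultimately show ?thesis by (simp add: K_def)
  qed simp
  have eq: "(\<lambda>t. indicator S0 t *\<^sub>R (g1 t / (C1 t - C1 (shx t)))) = (\<lambda>t. indicator S0 t *\<^sub>R K t)"
    using eq1 by (rule ext)
  show ?thesis unfolding set_borel_measurable_def using meas unfolding eq .
qed

definition W2 where "W2 = w2 UNIV"

lemma w1_sh_lower:
  assumes t: "th \<le> t" "ereal t < b"
  shows "\<delta> \<le> w1 {sh t..<t} * W2" and "0 < w1 {sh t..<t}"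
proof -
  have d: "w1 {sh t..<t} * w2 {sh t..<t} - (w3 {sh t..<t})\<^sup>2 = \<delta>"
    using sh_dt[OF t] unfolding dt_def detOmega_def .
  have "w2 {sh t..<t} \<le> W2" unfolding W2_def by (rule omg_mono[OF i2 g2_nn]) auto
  then have "w1 {sh t..<t} * w2 {sh t..<t} \<le> w1 {sh t..<t} * W2"
    using w1_nn by (rule mult_left_mono)
  then show "\<delta> \<le> w1 {sh t..<t} * W2" using d zero_le_power2[of "w3 {sh t..<t}"] by linarith
  show "0 < w1 {sh t..<t}" by (rule w1_pos) (use sh_dt[OF t] dpos in \<open>auto simp: dt_def\<close>)
qed

lemma W2_pos: "0 < W2"
proof -
  have "\<delta> \<le> w1 {sh th..<th} * W2" using w1_sh_lower th by simp
  then show ?thesis using dpos w1_nn[of "{sh th..<th}"]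
    by (metis less_le_trans mult_le_0_iff not_le)
qed

lemma K_int: "set_integrable lborel S0 K"
proof (rule set_integrable_bound[where f="\<lambda>t. g1 t * (W2 / \<delta>)"])
  show "set_integrable lborel S0 (\<lambda>t. g1 t * (W2 / \<delta>))"
    using int_sint[OF i1 S0_meas] by (rule set_integrable_mult_left)
  show "set_borel_measurable lborel S0 K" by (rule K_meas)
  show "AE t in lborel. t \<in> S0 \<longrightarrow> norm (K t) \<le> norm (g1 t * (W2 / \<delta>))"
  proof (intro AE_I2 impI)
    fix t assume "t \<in> S0"
    then have t: "th \<le> t" "ereal t < b" by (auto simp: S0_def)
    have l: "\<delta> \<le> w1 {sh t..<t} * W2" "0 < w1 {sh t..<t}" using w1_sh_lower[OF t] by auto
    have "1 / w1 {sh t..<t} \<le> W2 / \<delta>" using l dpos by (simp add: field_simps)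
    then have "\<bar>g1 t\<bar> * (1 / w1 {sh t..<t}) \<le> \<bar>g1 t\<bar> * (W2 / \<delta>)" by (rule mult_left_mono) simp
    then show "norm (K t) \<le> norm (g1 t * (W2 / \<delta>))"
      using l W2_pos dpos by (simp add: K_def abs_divide abs_mult)
  qed
qed

lemma K_int_sub: "B \<in> sets borel \<Longrightarrow> B \<subseteq> S0 \<Longrightarrow> set_integrable lborel B K"
  by (rule set_integrable_subset[OF K_int]) auto

definition tailS where "tailS = {t. p n \<le> t \<and> ereal t < b}"

lemma th_le_p: "1 \<le> k \<Longrightarrow> k \<le> n \<Longrightarrow> th \<le> p k"
  using good_le[OF good_n, of 1 k] p1 by simp

lemma link_sub: "1 \<le> k \<Longrightarrow> k < n \<Longrightarrow> {p k..<p (Suc k)} \<subseteq> S0"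
proof
  fix t assume k: "1 \<le> k" "k < n" and t: "t \<in> {p k..<p (Suc k)}"
  have "th \<le> t" using th_le_p[OF k(1)] k t by simp
  moreover have "ereal t < b"
    using good_b[OF good_n, of "Suc k"] k t by (meson atLeastLessThan_iff ereal_less_eq(3) less_imp_le le_less_trans Suc_leI)
  ultimately show "t \<in> S0" by (simp add: S0_def)
qed

lemma tail_sub: "tailS \<subseteq> S0"
  using th_le_p[OF n_ge1] by (auto simp: tailS_def S0_def)

lemma tailS_meas[measurable]: "tailS \<in> sets borel"
proof -
  have "tailS = {p n..} \<inter> {t. ereal t < b}" by (auto simp: tailS_def)
  then show ?thesis by simp
qed

lemma decomp_links:
  "1 \<le> m \<Longrightarrow> m \<le> n \<Longrightarrow> (LINT t:{p 1..<p m}|lborel. K t) = (\<Sum>k\<in>{1..<m}. LINT t:{p k..<p (Suc k)}|lborel. K t)"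
proof (induction m rule: dec_induct)
  case base
  then show ?case by (simp add: set_lebesgue_integral_def)
next
  case (step m)
  have d: "{p 1..<p m} \<inter> {p m..<p (Suc m)} = {}" by auto
  have e: "{p 1..<p m} \<union> {p m..<p (Suc m)} = {p 1..<p (Suc m)}"
    using good_le[OF good_n, of 1 m] good_le[OF good_n, of m "Suc m"] step by auto
  have s1: "{p 1..<p m} \<subseteq> S0"
  proof
    fix t assume "t \<in> {p 1..<p m}"
    moreover have "ereal (p m) < b" using good_b[OF good_n, of m] step by simp
    ultimately show "t \<in> S0" using p1 ereal_lt_b[of t "p m"] by (auto simp: S0_def)
  qed
  have "(LINT t:{p 1..<p (Suc m)}|lborel. K t) = (LINT t:{p 1..<p m}|lborel. K t) + (LINT t:{p m..<p (Suc m)}|lborel. K t)"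
    unfolding e[symmetric]
    by (rule set_integral_Un[OF d]) (use s1 link_sub[of m] step in \<open>auto intro!: K_int_sub\<close>)
  then show ?case using step by simp
qed

lemma decomp:
  "(LINT t:S0|lborel. K t) = (\<Sum>k\<in>{1..<n}. LINT t:{p k..<p (Suc k)}|lborel. K t) + (LINT t:tailS|lborel. K t)"
proof -
  have d: "{p 1..<p n} \<inter> tailS = {}" by (auto simp: tailS_def)
  have pn: "th \<le> p n" "ereal (p n) < b" using th_le_p[OF n_ge1] good_b[OF good_n, of n] by auto
  have e: "{p 1..<p n} \<union> tailS = S0"
  proof (rule set_eqI)
    fix t
    show "t \<in> {p 1..<p n} \<union> tailS \<longleftrightarrow> t \<in> S0"
    proof (cases "t < p n")
      case True
      then have "ereal t < b" using ereal_lt_b[of t "p n"] pn by simp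
      then show ?thesis using True p1 by (auto simp: tailS_def S0_def)
    next
      case False
      then show ?thesis using pn by (auto simp: tailS_def S0_def)
    qed
  qed
  have s1: "{p 1..<p n} \<subseteq> S0" using e by auto
  have "(LINT t:S0|lborel. K t) = (LINT t:{p 1..<p n}|lborel. K t) + (LINT t:tailS|lborel. K t)"
    unfolding e[symmetric]
    by (rule set_integral_Un[OF d]) (use s1 tail_sub in \<open>auto intro!: K_int_sub\<close>)
  then show ?thesis using decomp_links[OF n_ge1] by simp
qed

end


context CH begin

interpretation N1: nnf g1 by unfold_locales (rule i1, rule g1_nn)

lemma ok_p: "i < n \<Longrightarrow> ok (p i)" using good_n by (simp add: good_def)

lemma link_pts:
  assumes j: "Suc j < n" and t: "t \<in> {p (Suc j)..<p (Suc (Suc j))}"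
  shows "th \<le> t" "ereal t < b" "p j \<le> sh t" "sh t \<le> p (Suc j)"
proof -
  show th': "th \<le> t" using th_le_p[of "Suc j"] j t by simp
  have "t \<le> p (Suc (Suc j))" using t by simp
  then show tb: "ereal t < b" using good_b[OF good_n, of "Suc (Suc j)"] j ereal_lt_b[of t] by simp
  show "p j \<le> sh t"
    by (rule sb1) (use good_a[OF good_n, of j] ok_p[of j] j th' tb t in \<open>auto simp: pSuc\<close>)
  show "sh t \<le> p (Suc j)"
    by (rule sb2) (use good_a[OF good_n, of "Suc j"] ok_p[of "Suc j"] j th' t in \<open>auto simp: pSuc\<close>)
qed

lemma a_pos: "i < n \<Longrightarrow> 0 < w1 {p i..<p (Suc i)}"
  by (rule w1_pos) (use good_step[OF good_n, of i] dpos in \<open>auto simp: dt_def\<close>)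

lemma sh_S_dO: "th \<le> t \<Longrightarrow> ereal t < b \<Longrightarrow> dO {sh t..<t} = \<delta>"
  using sh by simp

lemma K_le_max:
  assumes t: "th \<le> t" "ereal t < b" and g: "0 \<le> g1 t"
    and B: "B \<in> sets borel" "{sh t..<t} \<subseteq> B" "0 < dO B" "0 < w1 B"
    and x: "x \<le> t" "sh t \<le> x"
  shows "K t \<le> g1 t / max (N1.Fi x t) (\<delta> * w1 B / dO B)"
proof -
  define S where "S = {sh t..<t}"
  have wS: "0 < w1 S" using w1_sh_lower[OF t] by (simp add: S_def)
  have "N1.Fi x t \<le> w1 S" unfolding N1.Fi_def S_def
    by (rule omg_mono[OF i1 g1_nn]) (use x in auto)
  moreover have "\<delta> * w1 B / dO B \<le> w1 S"
  proof -
    have "dO S * w1 B \<le> w1 S * dO B" by (rule schur) (use B in \<open>auto simp: S_def\<close>)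
    then have "\<delta> * w1 B \<le> w1 S * dO B" using sh_S_dO[OF t] by (simp add: S_def)
    then show ?thesis using B by (simp add: pos_divide_le_eq)
  qed
  ultimately have "max (N1.Fi x t) (\<delta> * w1 B / dO B) \<le> w1 S" by simp
  moreover have "0 < max (N1.Fi x t) (\<delta> * w1 B / dO B)" using B dpos by (simp add: less_max_iff_disj)
  ultimately show ?thesis unfolding K_def S_def[symmetric] using g
    by (intro divide_left_mono) (auto intro: mult_pos_pos)
qed

lemma final_sqrt_bound:
  assumes B: "0 < dO B" "0 < w1 B" "\<delta> \<le> dO B" and F: "F \<le> w1 B"
  shows "2 * sqrt (max 1 (F / (\<delta> * w1 B / dO B))) \<le> 2 * sqrt (dO B / \<delta>)"
proof -
  have "F / (\<delta> * w1 B / dO B) = F * dO B / (\<delta> * w1 B)" by simp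
  also have "\<dots> \<le> w1 B * dO B / (\<delta> * w1 B)"
    using F B dpos by (intro divide_right_mono mult_right_mono) auto
  also have "\<dots> = dO B / \<delta>" using B by simp
  finally have h: "F / (\<delta> * w1 B / dO B) \<le> dO B / \<delta>" .
  have "1 \<le> dO B / \<delta>" using B dpos by simp
  then have "max 1 (F / (\<delta> * w1 B / dO B)) \<le> dO B / \<delta>" using h by simp
  then show ?thesis by simp
qed

definition Bk :: "nat \<Rightarrow> real set" where
  "Bk k = (if k < n then {p (k - 1)..<p (Suc k)} else {p (k - 1)..})"

lemma Bk_meas[measurable]: "Bk k \<in> sets borel" by (simp add: Bk_def)

lemma link_upper:
  assumes j: "Suc j < n"
  shows "(LINT t:{p (Suc j)..<p (Suc (Suc j))}|lborel. K t) \<le> 2 * sqrt (dO (Bk (Suc j)) / \<delta>)"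
proof -
  define B where "B = {p j..<p (Suc (Suc j))}"
  have BB: "Bk (Suc j) = B" using j by (simp add: Bk_def B_def)
  have dB: "\<delta> \<le> dO B"
  proof -
    have "dO {p j..<p (Suc j)} \<le> dO B" unfolding B_def
      by (rule dO_mono) (use good_le[OF good_n, of "Suc j" "Suc (Suc j)"] j in auto)
    then show ?thesis using good_step[OF good_n, of j] j by (simp add: dt_def)
  qed
  have dBp: "0 < dO B" using dB dpos by simp
  have wB: "0 < w1 B" by (rule w1_pos) (use dBp in \<open>auto simp: B_def\<close>)
  define m where "m = \<delta> * w1 B / dO B"
  have m: "0 < m" using dpos wB dBp by (simp add: m_def)
  have "(LINT t:{p (Suc j)..<p (Suc (Suc j))}|lborel. K t) \<le>
        (LINT t:{p (Suc j)..<p (Suc (Suc j))}|lborel. g1 t / max (N1.Fi (p (Suc j)) t) m)"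
  proof (rule set_integral_mono_AE)
    show "set_integrable lborel {p (Suc j)..<p (Suc (Suc j))} K"
      by (rule K_int_sub) (use link_sub[of "Suc j"] j in auto)
    show "set_integrable lborel {p (Suc j)..<p (Suc (Suc j))} (\<lambda>t. g1 t / max (N1.Fi (p (Suc j)) t) m)"
      by (rule N1.sint_max[OF m]) simp
    show "AE t\<in>{p (Suc j)..<p (Suc (Suc j))} in lborel. K t \<le> g1 t / max (N1.Fi (p (Suc j)) t) m"
      using g1_nn
    proof eventually_elim
      case (elim t)
      show ?case
      proof
        assume t: "t \<in> {p (Suc j)..<p (Suc (Suc j))}"
        note lp = link_pts[OF j t]
        show "K t \<le> g1 t / max (N1.Fi (p (Suc j)) t) m"
          unfolding m_def
          by (rule K_le_max) (use lp elim t dBp wB in \<open>auto simp: B_def\<close>)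
      qed
    qed
  qed
  also have "\<dots> \<le> 2 * sqrt (max 1 (N1.Fi (p (Suc j)) (p (Suc (Suc j))) / m))"
    by (rule N1.ub_max[OF m]) (use good_le[OF good_n, of "Suc j" "Suc (Suc j)"] j in auto)
  also have "\<dots> \<le> 2 * sqrt (dO B / \<delta>)" unfolding m_def
  proof (rule final_sqrt_bound[OF dBp wB dB])
    show "N1.Fi (p (Suc j)) (p (Suc (Suc j))) \<le> w1 B"
      unfolding N1.Fi_def B_def by (rule omg_mono[OF i1 g1_nn]) (use good_le[OF good_n, of j "Suc j"] j in auto)
  qed
  finally show ?thesis using BB by simp
qed

lemma tail_pts:
  assumes t: "t \<in> tailS"
  shows "th \<le> t" "ereal t < b" "p (n - 1) \<le> sh t" "sh t \<le> p n"
proof -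
  show th': "th \<le> t" using th_le_p[OF n_ge1] t by (simp add: tailS_def)
  show tb: "ereal t < b" using t by (simp add: tailS_def)
  have nn: "Suc (n - 1) = n" using n_ge1 by simp
  show "p (n - 1) \<le> sh t"
    by (rule sb1) (use good_a[OF good_n, of "n - 1"] ok_p[of "n - 1"] n_ge1 th' tb t nn
        in \<open>auto simp: tailS_def pSuc[symmetric]\<close>)
  show "sh t \<le> p n" by (rule sb4) (use th' tb t in \<open>auto simp: tailS_def\<close>)
qed

lemma tail_upper:
  "(LINT t:tailS|lborel. K t) \<le> 2 * sqrt (dO (Bk n) / \<delta>)"
proof -
  define B where "B = {p (n - 1)..}"
  have BB: "Bk n = B" by (simp add: Bk_def B_def)
  have nn: "Suc (n - 1) = n" using n_ge1 by simp
  have dB: "\<delta> \<le> dO B"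
  proof -
    have "dO {p (n - 1)..<p n} \<le> dO B" unfolding B_def by (rule dO_mono) auto
    then show ?thesis using good_step[OF good_n, of "n - 1"] n_ge1 nn by (simp add: dt_def)
  qed
  have dBp: "0 < dO B" using dB dpos by simp
  have wB: "0 < w1 B" by (rule w1_pos) (use dBp in \<open>auto simp: B_def\<close>)
  define m where "m = \<delta> * w1 B / dO B"
  have m: "0 < m" using dpos wB dBp by (simp add: m_def)
  define G where "G = (\<lambda>t. g1 t / max (N1.Fi (p n) t) m)"
  have "(LINT t:tailS|lborel. K t) \<le> (LINT t:tailS|lborel. G t)"
  proof (rule set_integral_mono_AE)
    show "set_integrable lborel tailS K" by (rule K_int_sub) (use tail_sub in auto)
    show "set_integrable lborel tailS G" unfolding G_def by (rule N1.sint_max[OF m]) simp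
    show "AE t\<in>tailS in lborel. K t \<le> G t"
      using g1_nn
    proof eventually_elim
      case (elim t)
      show ?case
      proof
        assume t: "t \<in> tailS"
        note lp = tail_pts[OF t]
        have "p n \<le> t" using t by (simp add: tailS_def)
        then show "K t \<le> G t"
          unfolding m_def G_def
          by (intro K_le_max) (use lp elim t dBp wB in \<open>auto simp: B_def\<close>)
      qed
    qed
  qed
  also have "(LINT t:tailS|lborel. G t) = (LINT t:{p n..}|lborel. G t)"
  proof (rule lint_pts[where X="{}"])
    fix x
    show "indicator tailS x * G x = indicator {p n..} x * G x"
    proof (cases "x \<in> tailS")
      case False
      show ?thesis
      proof (cases "p n \<le> x")
        case True
        then have "\<not> ereal x < b" using False by (simp add: tailS_def)
        then have "g1 x = 0" using zero_out by auto
        then show ?thesis by (simp add: G_def)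
      qed (use False in simp)
    qed (simp add: tailS_def)
  qed simp
  also have "\<dots> \<le> 2 * sqrt (max 1 (w1 {p n..} / m))" unfolding G_def by (rule N1.ub_max_tail[OF m])
  also have "\<dots> \<le> 2 * sqrt (dO B / \<delta>)" unfolding m_def
  proof (rule final_sqrt_bound[OF dBp wB dB])
    show "w1 {p n..} \<le> w1 B"
      unfolding B_def by (rule omg_mono[OF i1 g1_nn]) (use good_le[OF good_n, of "n - 1" n] in auto)
  qed
  finally show ?thesis using BB by simp
qed

lemma tail_nn: "0 \<le> (LINT t:tailS|lborel. K t)"
  unfolding set_lebesgue_integral_def
proof (rule integral_nonneg_AE)
  show "AE x in lborel. 0 \<le> indicator tailS x *\<^sub>R K x"
    using g1_nn
  proof eventually_elim
    case (elim t)
    show ?case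
    proof (cases "t \<in> tailS")
      case True
      have "0 < w1 {sh t..<t}" using w1_sh_lower tail_pts[OF True] by simp
      then show ?thesis using elim True by (simp add: K_def)
    qed simp
  qed
qed

definition aa :: "nat \<Rightarrow> real" where "aa i = w1 {p i..<p (Suc i)}"

lemma link_lower:
  assumes j: "Suc j < n"
  shows "ln ((aa j + aa (Suc j)) / aa j) \<le> (LINT t:{p (Suc j)..<p (Suc (Suc j))}|lborel. K t)"
proof -
  have c: "0 < aa j" using a_pos[of j] j by (simp add: aa_def)
  have "ln ((aa j + N1.Fi (p (Suc j)) (p (Suc (Suc j)))) / aa j) \<le>
      (LINT t:{p (Suc j)..<p (Suc (Suc j))}|lborel. g1 t / (aa j + N1.Fi (p (Suc j)) t))"
    by (rule N1.lb_log[OF c]) (use good_le[OF good_n, of "Suc j" "Suc (Suc j)"] j in auto)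
  also have "\<dots> \<le> (LINT t:{p (Suc j)..<p (Suc (Suc j))}|lborel. K t)"
  proof (rule set_integral_mono_AE)
    show "set_integrable lborel {p (Suc j)..<p (Suc (Suc j))} K"
      by (rule K_int_sub) (use link_sub[of "Suc j"] j in auto)
    show "set_integrable lborel {p (Suc j)..<p (Suc (Suc j))} (\<lambda>t. g1 t / (aa j + N1.Fi (p (Suc j)) t))"
      by (rule N1.sint_div[OF c]) simp
    show "AE t\<in>{p (Suc j)..<p (Suc (Suc j))} in lborel. g1 t / (aa j + N1.Fi (p (Suc j)) t) \<le> K t"
      using g1_nn
    proof eventually_elim
      case (elim t)
      show ?case
      proof
        assume t: "t \<in> {p (Suc j)..<p (Suc (Suc j))}"
        note lp = link_pts[OF j t]
        have wS: "0 < w1 {sh t..<t}" using w1_sh_lower[OF lp(1,2)] by simp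
        have "w1 {sh t..<t} \<le> w1 {p j..<t}"
          by (rule omg_mono[OF i1 g1_nn]) (use lp in auto)
        also have "w1 {p j..<t} = aa j + N1.Fi (p (Suc j)) t"
          unfolding aa_def N1.Fi_def
          by (rule omg_Ico_split[OF i1]) (use good_le[OF good_n, of j "Suc j"] j t in auto)
        finally have "w1 {sh t..<t} \<le> aa j + N1.Fi (p (Suc j)) t" .
        then show "g1 t / (aa j + N1.Fi (p (Suc j)) t) \<le> K t"
          unfolding K_def using wS elim by (intro divide_left_mono) auto
      qed
    qed
  qed
  finally show ?thesis by (simp add: aa_def N1.Fi_def)
qed

end


lemma ln_le_ln_cancel_iff_rev: "0 < (x::real) \<Longrightarrow> x \<le> y \<Longrightarrow> ln x \<le> ln y"
  by simp

lemma amgm_ln: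
  fixes x y :: real
  assumes x: "0 < x" and y: "0 < y"
  shows "ln 2 + (ln y - ln x) / 2 \<le> ln ((x + y) / x)"
proof -
  have q: "0 < y / x" using x y by simp
  have "(sqrt (y / x) - 1)\<^sup>2 \<ge> 0" by simp
  then have "2 * sqrt (y / x) \<le> 1 + y / x"
    using q by (simp add: power2_eq_square algebra_simps)
  also have "1 + y / x = (x + y) / x" using x by (simp add: field_simps)
  finally have le: "2 * sqrt (y / x) \<le> (x + y) / x" .
  have "ln (2 * sqrt (y / x)) = ln 2 + (ln y - ln x) / 2"
    using q x y by (simp add: ln_mult ln_sqrt ln_div)
  moreover have "ln (2 * sqrt (y / x)) \<le> ln ((x + y) / x)"
  proof -
    have "0 < (x + y) / x" using x y by simp
    then show ?thesis using le q by (subst ln_le_cancel_iff) auto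
  qed
  ultimately show ?thesis by simp
qed

context CH begin

lemma Bk_disj:
  assumes ij: "1 \<le> i" "Suc i < j" "j \<le> n"
  shows "Bk i \<inter> Bk j = {}"
proof -
  have in_: "i < n" using ij by simp
  have "Bk i = {p (i - 1)..<p (Suc i)}" using in_ by (simp add: Bk_def)
  moreover have "Bk j \<subseteq> {p (j - 1)..}" by (auto simp: Bk_def)
  moreover have "p (Suc i) \<le> p (j - 1)"
    by (rule good_le[OF good_n]) (use ij in simp_all)
  ultimately show ?thesis by fastforce
qed

lemma parity_family:
  assumes P: "\<And>i j. P i \<Longrightarrow> P j \<Longrightarrow> i < j \<Longrightarrow> Suc i < j"
  shows "(\<Sum>k\<in>{1..n} \<inter> {k. P k}. sqrt (dO (Bk k))) \<le> sqrt (dO UNIV)"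
proof -
  have "(\<Sum>k\<in>{1..n} \<inter> {k. P k}. sqrt (dO (Bk k))) \<le> sqrt (dO (\<Union>k\<in>{1..n} \<inter> {k. P k}. Bk k))"
  proof (rule family)
    fix i j assume i: "i \<in> {1..n} \<inter> {k. P k}" and j: "j \<in> {1..n} \<inter> {k. P k}" and ne: "i \<noteq> j"
    have i1: "1 \<le> i" "i \<le> n" "P i" using i by auto
    have j1: "1 \<le> j" "j \<le> n" "P j" using j by auto
    show "Bk i \<inter> Bk j = {}"
    proof (cases "i < j")
      case True
      have "Suc i < j" using P[OF i1(3) j1(3) True] .
      then show ?thesis using Bk_disj[OF i1(1) _ j1(2)] by simp
    next
      case False
      then have ji: "j < i" using ne by simp
      have "Suc j < i" using P[OF j1(3) i1(3) ji] .
      then have "Bk j \<inter> Bk i = {}" using Bk_disj[OF j1(1) _ i1(2)] by simp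
      then show ?thesis by blast
    qed
  next
    show "finite ({1..n} \<inter> {k. P k})" by simp
  next
    fix i show "Bk i \<in> sets borel" by simp
  qed
  also have "\<dots> \<le> sqrt (dO UNIV)"
  proof -
    have "(\<Union>k\<in>{1..n} \<inter> {k. P k}. Bk k) \<in> sets borel"
      by (rule sets.finite_UN) auto
    then have "dO (\<Union>k\<in>{1..n} \<inter> {k. P k}. Bk k) \<le> dO UNIV" by (rule dO_mono) auto
    then show ?thesis by (rule real_sqrt_le_mono)
  qed
  finally show ?thesis .
qed

lemma sum_Bk: "(\<Sum>k\<in>{1..n}. sqrt (dO (Bk k))) \<le> 2 * sqrt (dO UNIV)"
proof -
  have e1: "{1..n} - {k. even k} = {1..n} \<inter> {k. odd k}" by blast
  have s: "(\<Sum>k\<in>{1..n}. sqrt (dO (Bk k))) =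
      (\<Sum>k\<in>{1..n} \<inter> {k. even k}. sqrt (dO (Bk k))) + (\<Sum>k\<in>{1..n} \<inter> {k. odd k}. sqrt (dO (Bk k)))"
    unfolding e1[symmetric] by (rule sum.Int_Diff) (rule finite_atLeastAtMost)
  have ev: "(\<Sum>k\<in>{1..n} \<inter> {k. even k}. sqrt (dO (Bk k))) \<le> sqrt (dO UNIV)"
  proof (rule parity_family)
    fix i j :: nat assume "even i" "even j" "i < j"
    then show "Suc i < j" by presburger
  qed
  have od: "(\<Sum>k\<in>{1..n} \<inter> {k. odd k}. sqrt (dO (Bk k))) \<le> sqrt (dO UNIV)"
  proof (rule parity_family)
    fix i j :: nat assume "odd i" "odd j" "i < j"
    then show "Suc i < j" by presburger
  qed
  show ?thesis using s ev od by linarith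
qed

lemma upper_total: "(LINT t:S0|lborel. K t) \<le> 4 * sqrt (dO UNIV) / sqrt \<delta>"
proof -
  have "(LINT t:S0|lborel. K t) \<le> (\<Sum>k\<in>{1..<n}. 2 * sqrt (dO (Bk k) / \<delta>)) + 2 * sqrt (dO (Bk n) / \<delta>)"
  proof -
    have "(\<Sum>k\<in>{1..<n}. LINT t:{p k..<p (Suc k)}|lborel. K t) \<le> (\<Sum>k\<in>{1..<n}. 2 * sqrt (dO (Bk k) / \<delta>))"
    proof (rule sum_mono)
      fix k assume k: "k \<in> {1..<n}"
      then have kk: "Suc (k - 1) = k" "Suc (k - 1) < n" by auto
      show "(LINT t:{p k..<p (Suc k)}|lborel. K t) \<le> 2 * sqrt (dO (Bk k) / \<delta>)"
        using link_upper[OF kk(2)] unfolding kk(1) .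
    qed
    then show ?thesis using decomp tail_upper by linarith
  qed
  also have "\<dots> = (\<Sum>k\<in>{1..n}. 2 * sqrt (dO (Bk k) / \<delta>))"
  proof -
    have "{1..n} = insert n {1..<n}" using n_ge1 by auto
    then show ?thesis by simp
  qed
  also have "\<dots> = 2 * (\<Sum>k\<in>{1..n}. sqrt (dO (Bk k))) / sqrt \<delta>"
  proof -
    have "\<And>k. 2 * sqrt (dO (Bk k) / \<delta>) = (2 / sqrt \<delta>) * sqrt (dO (Bk k))"
      by (simp add: real_sqrt_divide)
    then have "(\<Sum>k\<in>{1..n}. 2 * sqrt (dO (Bk k) / \<delta>)) = (2 / sqrt \<delta>) * (\<Sum>k\<in>{1..n}. sqrt (dO (Bk k)))"
      by (simp add: sum_distrib_left)
    then show ?thesis by simp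
  qed
  also have "\<dots> \<le> 2 * (2 * sqrt (dO UNIV)) / sqrt \<delta>"
    using sum_Bk dpos by (intro divide_right_mono mult_left_mono) auto
  finally show ?thesis by simp
qed

lemma lower_sum:
  "Suc k \<le> n \<Longrightarrow>
    real k * ln 2 + (ln (aa k) - ln (aa 0)) / 2 \<le> (\<Sum>j\<in>{1..<Suc k}. LINT t:{p j..<p (Suc j)}|lborel. K t)"
proof (induction k)
  case 0
  then show ?case by simp
next
  case (Suc k)
  have IH: "real k * ln 2 + (ln (aa k) - ln (aa 0)) / 2 \<le> (\<Sum>j\<in>{1..<Suc k}. LINT t:{p j..<p (Suc j)}|lborel. K t)"
    using Suc by simp
  have k: "Suc k < n" using Suc.prems by simp
  have l: "ln ((aa k + aa (Suc k)) / aa k) \<le> (LINT t:{p (Suc k)..<p (Suc (Suc k))}|lborel. K t)"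
    by (rule link_lower[OF k])
  have am: "ln 2 + (ln (aa (Suc k)) - ln (aa k)) / 2 \<le> ln ((aa k + aa (Suc k)) / aa k)"
    by (rule amgm_ln) (use a_pos[of k] a_pos[of "Suc k"] k in \<open>auto simp: aa_def\<close>)
  have sm: "(\<Sum>j\<in>{1..<Suc (Suc k)}. LINT t:{p j..<p (Suc j)}|lborel. K t) =
      (\<Sum>j\<in>{1..<Suc k}. LINT t:{p j..<p (Suc j)}|lborel. K t) + (LINT t:{p (Suc k)..<p (Suc (Suc k))}|lborel. K t)"
    by (rule sum.atLeastLessThan_Suc) simp
  have "real (Suc k) * ln 2 + (ln (aa (Suc k)) - ln (aa 0)) / 2 =
      (real k * ln 2 + (ln (aa k) - ln (aa 0)) / 2) + (ln 2 + (ln (aa (Suc k)) - ln (aa k)) / 2)"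
    by (simp add: algebra_simps add_divide_distrib diff_divide_distrib)
  then show ?case using IH l am sm by linarith
qed

lemma phi_zero: "x < a \<Longrightarrow> phi x = 0"
  using zero_out[of x] by (simp add: phi_def)

lemma A_pieces: "m \<le> n \<Longrightarrow> omg phi {a..<p m} \<le> real m * sqrt \<delta>"
proof (induction m)
  case 0
  then show ?case by (simp add: omg_def set_lebesgue_integral_def)
next
  case (Suc m)
  have mn: "m < n" using Suc.prems by simp
  have IH: "omg phi {a..<p m} \<le> real m * sqrt \<delta>" using Suc.IH mn by simp
  have am: "a \<le> p m" using good_a[OF good_n, of m] mn by simp
  have mm: "p m \<le> p (Suc m)" using good_step[OF good_n mn] by simp
  have sp: "omg phi {a..<p (Suc m)} = omg phi {a..<p m} + omg phi {p m..<p (Suc m)}"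
    by (rule omg_Ico_split[OF phi_int am mm])
  have im: "omg phi {p m..<p (Suc m)} \<le> sqrt (dO {p m..<p (Suc m)})" by (rule int_mink) simp
  have dd: "dO {p m..<p (Suc m)} = \<delta>" using good_step[OF good_n mn] unfolding dt_def by simp
  have "omg phi {a..<p (Suc m)} \<le> real m * sqrt \<delta> + sqrt \<delta>" using sp im dd IH by simp
  then show ?case by (simp add: distrib_right)
qed

lemma A_bound: "omg phi UNIV \<le> real (n + 1) * sqrt \<delta>"
proof -
  have d1: "{..<a} \<inter> {a..} = {}" by auto
  have u: "{..<a} \<union> {a..} = UNIV" by auto
  have s1: "omg phi ({..<a} \<union> {a..}) = omg phi {..<a} + omg phi {a..}"
    by (rule omg_Un[OF phi_int _ _ d1]) auto
  have z: "omg phi {..<a} = 0"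
  proof -
    have "omg phi {..<a} = omg (\<lambda>x. 0) {..<a}" unfolding omg_def
      by (rule set_lebesgue_integral_cong) (auto simp: phi_zero)
    then show ?thesis by (simp add: omg_def set_lebesgue_integral_def)
  qed
  have an: "a \<le> p n" using good_a[OF good_n, of n] by simp
  have s2: "omg phi {a..} = omg phi {a..<p n} + omg phi {p n..}"
    by (rule omg_Ici_split[OF phi_int an])
  have t1: "omg phi {p n..} \<le> sqrt (dO {p n..})" by (rule int_mink) simp
  have t2: "sqrt (dO {p n..}) \<le> sqrt \<delta>" using tail_le by simp
  have t3: "omg phi {a..<p n} \<le> real n * sqrt \<delta>" by (rule A_pieces) simp
  have "omg phi UNIV = omg phi {a..<p n} + omg phi {p n..}" using s1 z s2 u by simp
  then have "omg phi UNIV \<le> real n * sqrt \<delta> + sqrt \<delta>" using t1 t2 t3 by linarith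
  then show ?thesis by (simp add: distrib_right)
qed

lemma lower_total:
  "omg phi UNIV * ln 2 / sqrt \<delta> - ln (2 * (w1 UNIV + w2 UNIV) / sqrt \<delta>) \<le> (LINT t:S0|lborel. K t)"
proof -
  define W1 where "W1 = w1 UNIV"
  define T where "T = W1 + W2"
  have a0: "0 < aa 0" using a_pos[of 0] n_ge1 by (simp add: aa_def)
  have an: "0 < aa (n - 1)" using a_pos[of "n - 1"] n_ge1 by (simp add: aa_def)
  have a0W: "aa 0 \<le> W1" unfolding aa_def W1_def by (rule omg_mono[OF i1 g1_nn]) auto
  have W1p: "0 < W1" using a0 a0W by simp
  have anW: "\<delta> \<le> aa (n - 1) * W2"
  proof -
    define P where "P = {p (n - 1)..<p n}"
    have nn: "Suc (n - 1) = n" using n_ge1 by simp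
    have d: "w1 P * w2 P - (w3 P)\<^sup>2 = \<delta>"
      using good_step[OF good_n, of "n - 1"] n_ge1 nn unfolding dt_def detOmega_def P_def by simp
    have "w2 P \<le> W2" unfolding W2_def P_def by (rule omg_mono[OF i2 g2_nn]) auto
    then have "w1 P * w2 P \<le> w1 P * W2" using w1_nn by (rule mult_left_mono)
    moreover have "aa (n - 1) * W2 = w1 P * W2" unfolding aa_def P_def using nn by simp
    ultimately show ?thesis using d zero_le_power2[of "w3 P"] by linarith
  qed
  have Dle: "\<delta> \<le> W1 * W2"
  proof -
    have "dO {a..<th} \<le> dO UNIV" by (rule dO_mono) auto
    moreover have "dO UNIV \<le> W1 * W2" unfolding detOmega_def W1_def W2_def by simp
    ultimately show ?thesis using th by simp
  qed
  have WT: "4 * (W1 * W2) \<le> T\<^sup>2" unfolding T_def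
    using zero_le_power2[of "W1 - W2"] by (simp add: power2_eq_square algebra_simps)
  have Tp: "0 < T" using W1p W2_pos by (simp add: T_def)
  have lnW: "ln W1 + ln W2 \<le> 2 * ln T - 2 * ln 2"
  proof -
    have "ln W1 + ln W2 = ln (W1 * W2)" using W1p W2_pos by (simp add: ln_mult)
    also have "\<dots> \<le> ln (T\<^sup>2 / 4)"
    proof -
      have "0 < W1 * W2" using W1p W2_pos by simp
      moreover have "W1 * W2 \<le> T\<^sup>2 / 4" using WT by simp
      ultimately show ?thesis by (rule ln_le_ln_cancel_iff_rev)
    qed
    also have "\<dots> = 2 * ln T - 2 * ln 2"
    proof -
      have "ln (T\<^sup>2 / 4) = ln (T\<^sup>2) - ln 4" using Tp by (simp add: ln_div)
      moreover have "ln (T\<^sup>2) = 2 * ln T" using Tp by (simp add: ln_realpow)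
      moreover have "ln (4::real) = 2 * ln 2" using ln_realpow[of 2 2] by simp
      ultimately show ?thesis by simp
    qed
    finally show ?thesis .
  qed
  have lnd: "ln \<delta> \<le> ln (aa (n - 1)) + ln W2"
  proof -
    have "ln \<delta> \<le> ln (aa (n - 1) * W2)" by (rule ln_le_ln_cancel_iff_rev[OF dpos anW])
    also have "\<dots> = ln (aa (n - 1)) + ln W2" using an W2_pos by (simp add: ln_mult)
    finally show ?thesis .
  qed
  have lna0: "ln (aa 0) \<le> ln W1" using a0W a0 by simp
  have sum_lb: "real (n - 1) * ln 2 + (ln (aa (n - 1)) - ln (aa 0)) / 2 \<le> (LINT t:S0|lborel. K t)"
  proof -
    have nn: "Suc (n - 1) = n" using n_ge1 by simp
    have "real (n - 1) * ln 2 + (ln (aa (n - 1)) - ln (aa 0)) / 2 \<le>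
        (\<Sum>j\<in>{1..<Suc (n - 1)}. LINT t:{p j..<p (Suc j)}|lborel. K t)"
      by (rule lower_sum) (use nn in simp)
    then show ?thesis using decomp tail_nn nn by simp
  qed
  have A: "omg phi UNIV * ln 2 / sqrt \<delta> \<le> real (n + 1) * ln 2"
  proof -
    have "omg phi UNIV * ln 2 \<le> real (n + 1) * sqrt \<delta> * ln 2" using A_bound by (simp add: mult_right_mono)
    then show ?thesis using dpos by (simp add: divide_le_eq algebra_simps)
  qed
  have L2: "ln (2 * T / sqrt \<delta>) = ln 2 + ln T - ln \<delta> / 2"
    using Tp dpos by (simp add: ln_div ln_mult ln_sqrt)
  have e1: "real (n - 1) * ln 2 = real n * ln 2 - ln 2" using n_ge1 by (simp add: of_nat_diff algebra_simps)
  have e2: "real (n + 1) * ln 2 = real n * ln 2 + ln 2" by (simp add: algebra_simps)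
  have e3: "2 * (w1 UNIV + w2 UNIV) = 2 * T" by (simp add: T_def W1_def W2_def)
  define la where "la = ln (aa (n - 1))"
  define l0 where "l0 = ln (aa 0)"
  define N2 where "N2 = real n * ln 2"
  define I where "I = (LINT t:S0|lborel. K t)"
  have sl: "N2 - ln 2 + (la - l0) / 2 \<le> I" using sum_lb unfolding e1 la_def l0_def N2_def I_def .
  have r1: "real n * ln 2 + ln \<delta> / 2 - ln T \<le> (LINT t:S0|lborel. K t)"
    using sl lnW lnd lna0 unfolding la_def[symmetric] l0_def[symmetric] N2_def[symmetric] I_def[symmetric]
    by argo
  have r2: "omg phi UNIV * ln 2 / sqrt \<delta> - ln (2 * T / sqrt \<delta>) \<le> real n * ln 2 + ln \<delta> / 2 - ln T"
    using A L2 e2 by linarith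
  show ?thesis unfolding e3 using r1 r2 by linarith
qed

theorem CH_main:
  "set_integrable lborel S0 K \<and>
   omg phi UNIV * ln 2 / sqrt \<delta> - ln (2 * (w1 UNIV + w2 UNIV) / sqrt \<delta>) \<le> (LINT t:S0|lborel. K t) \<and>
   (LINT t:S0|lborel. K t) \<le> 4 * sqrt (dO UNIV) / sqrt \<delta>"
  using K_int lower_total upper_total by blast

end


lemma CH_Tpos: "CH g1 g2 g3 a b \<delta> th sh \<Longrightarrow> 0 < omg g1 UNIV + omg g2 UNIV"
proof -
  assume "CH g1 g2 g3 a b \<delta> th sh"
  then interpret C: CH g1 g2 g3 a b \<delta> th sh .
  show ?thesis using C.W2_pos C.w1_nn[of UNIV] unfolding C.W2_def by simp
qed

lemma omg_h_g:
  fixes h :: "real \<Rightarrow> real"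
  assumes "a \<le> s" "ereal t < b"
  shows "omg h {s..t} = omg (\<lambda>x. indicator (ival a b) x * h x) {s..<t}"
  unfolding omg_def
proof (rule lint_pts[where X="{a, t}"])
  fix x assume x: "x \<notin> {a, t}"
  show "indicator {s..t} x * h x = indicator {s..<t} x * (indicator (ival a b) x * h x)"
  proof (cases "x \<in> {s..<t}")
    case True
    then have "a < x" using x assms by auto
    moreover have "ereal x < b" using True assms by (meson atLeastLessThan_iff ereal_less_eq(3) less_imp_le le_less_trans)
    ultimately have "x \<in> ival a b" by (simp add: ival_def)
    then show ?thesis using True by simp
  next
    case False
    then show ?thesis using x by (auto simp: indicator_def)
  qed
qed simp

theorem proposition5p11:
  fixes a :: real and b :: ereal and h1 h2 h3 :: "real \<Rightarrow> real"
    and c r0 :: real and that :: "real \<Rightarrow> real" and shat :: "real \<Rightarrow> real \<Rightarrow> real"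
  assumes ham: "hamiltonian a b h1 h2 h3"
    and lc: "limit_circle a b h1 h2"
    and def: "definite a b h1 h2 h3"
    and cpos: "c > 0"
    and r0_def: "r0 = sqrt (c / detOmega h1 h2 h3 (ival a b))"
    and that_prop: "\<And>r. r > r0 \<Longrightarrow>
        a < that r \<and> ereal (that r) < b \<and> detOmega h1 h2 h3 {a..that r} = c / r\<^sup>2"
    and shat_prop: "\<And>r t. r > r0 \<Longrightarrow> that r \<le> t \<Longrightarrow> ereal t < b \<Longrightarrow>
        a \<le> shat t r \<and> shat t r \<le> t \<and> detOmega h1 h2 h3 {shat t r..t} = c / r\<^sup>2"
  shows "\<And>r. r > r0 \<Longrightarrow>
      set_integrable lborel {t. that r \<le> t \<and> ereal t < b}
        (\<lambda>t. kernelH a b h1 h2 h3 c that shat t r) \<and>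
      (LINT t:ival a b|lborel. sqrt (h1 t * h2 t - (h3 t)\<^sup>2)) / sqrt c * ln 2 * r
        - (ln r + ln (2 * trOmega h1 h2 (ival a b) / sqrt c))
      \<le> (LINT t:{t. that r \<le> t \<and> ereal t < b}|lborel. kernelH a b h1 h2 h3 c that shat t r) \<and>
      (LINT t:{t. that r \<le> t \<and> ereal t < b}|lborel. kernelH a b h1 h2 h3 c that shat t r)
      \<le> 4 * sqrt (detOmega h1 h2 h3 (ival a b)) / sqrt c * r"
proof -
  fix r assume r: "r > r0"
  define I where "I = ival a b"
  define g1 where "g1 = (\<lambda>x. indicator I x * h1 x)"
  define g2 where "g2 = (\<lambda>x. indicator I x * h2 x)"
  define g3 where "g3 = (\<lambda>x. indicator I x * h3 x)"
  have ab: "ereal a < b" and hm: "\<forall>h\<in>{h1,h2,h3}. set_borel_measurable lborel I h"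
    and hpsd: "AE t in lborel. t \<in> I \<longrightarrow> h1 t \<ge> 0 \<and> h2 t \<ge> 0 \<and> h1 t * h2 t - (h3 t)\<^sup>2 \<ge> 0"
    and hnz: "AE t in lborel. t \<in> I \<longrightarrow> \<not> (h1 t = 0 \<and> h2 t = 0 \<and> h3 t = 0)"
    using ham unfolding hamiltonian_def I_def by auto
  have gm[measurable]: "g1 \<in> borel_measurable lborel" "g2 \<in> borel_measurable lborel" "g3 \<in> borel_measurable lborel"
    using hm unfolding set_borel_measurable_def g1_def g2_def g3_def by auto
  have gpsd: "AE x in lborel. 0 \<le> g1 x \<and> 0 \<le> g2 x \<and> (g3 x)\<^sup>2 \<le> g1 x * g2 x"
    using hpsd by eventually_elim (auto simp: g1_def g2_def g3_def indicator_def)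
  have i12: "integrable lborel (\<lambda>x. g1 x + g2 x)"
    using lc unfolding limit_circle_def set_integrable_def g1_def g2_def I_def
    by (simp add: distrib_left)
  have i1: "integrable lborel g1"
  proof (rule Bochner_Integration.integrable_bound[OF i12 gm(1)])
    show "AE x in lborel. norm (g1 x) \<le> norm (g1 x + g2 x)" using gpsd by eventually_elim auto
  qed
  have i2: "integrable lborel g2"
  proof (rule Bochner_Integration.integrable_bound[OF i12 gm(2)])
    show "AE x in lborel. norm (g2 x) \<le> norm (g1 x + g2 x)" using gpsd by eventually_elim auto
  qed
  have i3: "integrable lborel g3"
  proof (rule Bochner_Integration.integrable_bound[OF i12 gm(3)])
    show "AE x in lborel. norm (g3 x) \<le> norm (g1 x + g2 x)" using gpsd
    proof eventually_elim
      case (elim x)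
      have e: "(g1 x + g2 x)\<^sup>2 = g1 x * g2 x + (g1 x * g1 x + g1 x * g2 x + g2 x * g2 x)"
        by (simp add: power2_eq_square algebra_simps)
      have "0 \<le> g1 x * g1 x + g1 x * g2 x + g2 x * g2 x" using elim by simp
      then have "g1 x * g2 x \<le> (g1 x + g2 x)\<^sup>2" using e by linarith
      then have "\<bar>g3 x\<bar>\<^sup>2 \<le> (g1 x + g2 x)\<^sup>2" using elim by simp
      then have "\<bar>g3 x\<bar> \<le> g1 x + g2 x" by (rule power2_le_imp_le) (use elim in simp)
      then show ?case using elim by simp
    qed
  qed
  interpret H: HS g1 g2 g3 by unfold_locales (use i1 i2 i3 gpsd in auto)
  have omgI: "omg h I = omg (\<lambda>x. indicator I x * h x) UNIV" for h
    unfolding omg_def set_lebesgue_integral_def by simp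
  have DD: "detOmega h1 h2 h3 (ival a b) = H.dO UNIV"
    unfolding detOmega_def I_def[symmetric] omgI g1_def g2_def g3_def ..
  have D0: "0 \<le> H.dO UNIV" by (rule H.dO_nn) simp
  have r0: "0 \<le> r0" unfolding r0_def DD using D0 cpos by simp
  have rp: "0 < r" using r r0 by simp
  define \<delta> where "\<delta> = c / r\<^sup>2"
  have dpos: "0 < \<delta>" using cpos rp by (simp add: \<delta>_def)
  have tr: "omg h {s..t} = omg (\<lambda>x. indicator I x * h x) {s..<t}" if "a \<le> s" "ereal t < b" for h s t
    unfolding I_def by (rule omg_h_g) (use that in auto)
  have dtr: "detOmega h1 h2 h3 {s..t} = H.dO {s..<t}" if "a \<le> s" "ereal t < b" for s t
    unfolding detOmega_def using tr[OF that] by (simp add: g1_def g2_def g3_def)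
  have thp: "a < that r" "ereal (that r) < b" "H.dO {a..<that r} = \<delta>"
    using that_prop[OF r] dtr[of a "that r"] by (auto simp: \<delta>_def)
  have shp: "a \<le> shat t r \<and> shat t r \<le> t \<and> H.dO {shat t r..<t} = \<delta>" if "that r \<le> t" "ereal t < b" for t
    using shat_prop[OF r that] dtr[of "shat t r" t] that by (auto simp: \<delta>_def)
  have zo: "\<And>x. \<not> (a < x \<and> ereal x < b) \<Longrightarrow> g1 x = 0 \<and> g2 x = 0 \<and> g3 x = 0"
    by (auto simp: g1_def g2_def g3_def I_def ival_def)
  have posH: "AE x in lborel. a < x \<and> ereal x < b \<longrightarrow> 0 < g1 x + g2 x"
    using hpsd hnz
  proof eventually_elim
    case (elim x)
    show ?case
    proof
      assume x: "a < x \<and> ereal x < b"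
      then have xI: "x \<in> I" by (simp add: I_def ival_def)
      have nn: "0 \<le> h1 x" "0 \<le> h2 x" "(h3 x)\<^sup>2 \<le> h1 x * h2 x" using elim xI by auto
      have "h1 x + h2 x \<noteq> 0"
      proof
        assume "h1 x + h2 x = 0"
        then have "h1 x = 0" "h2 x = 0" using nn by auto
        then have "h3 x = 0" using nn by simp
        then show False using elim xI \<open>h1 x = 0\<close> \<open>h2 x = 0\<close> by simp
      qed
      then show "0 < g1 x + g2 x" using nn xI by (simp add: g1_def g2_def)
    qed
  qed
  interpret C: CH g1 g2 g3 a b \<delta> "that r" "\<lambda>t. shat t r"
    by unfold_locales (use ab zo posH dpos thp shp in auto)
  note main = C.CH_main
  have Tpos: "0 < omg g1 UNIV + omg g2 UNIV" by (rule CH_Tpos) (rule C.CH_axioms)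
  have S0eq: "C.S0 = {t. that r \<le> t \<and> ereal t < b}" by (simp add: C.S0_def)
  have keq: "kernelH a b h1 h2 h3 c that shat t r = C.K t" if "t \<in> C.S0" for t
  proof -
    have t: "that r \<le> t" "ereal t < b" using that by (auto simp: C.S0_def)
    have "t \<in> I" using t thp by (simp add: I_def ival_def)
    then have "h1 t = g1 t" by (simp add: g1_def)
    moreover have "omg h1 {shat t r..t} = omg g1 {shat t r..<t}"
      using tr[of "shat t r" t h1] shp[OF t] t by (simp add: g1_def)
    ultimately show ?thesis using t by (simp add: kernelH_def C.K_def)
  qed
  have int_eq: "(LINT t:{t. that r \<le> t \<and> ereal t < b}|lborel. kernelH a b h1 h2 h3 c that shat t r) =
      (LINT t:C.S0|lborel. C.K t)"
    unfolding S0eq[symmetric] by (rule set_lebesgue_integral_cong) (auto simp: keq)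
  have sint: "set_integrable lborel {t. that r \<le> t \<and> ereal t < b} (\<lambda>t. kernelH a b h1 h2 h3 c that shat t r)"
  proof -
    have "(\<lambda>x. indicator C.S0 x *\<^sub>R kernelH a b h1 h2 h3 c that shat x r) = (\<lambda>x. indicator C.S0 x *\<^sub>R C.K x)"
      by (rule ext) (simp add: keq indicator_def)
    then show ?thesis using main unfolding set_integrable_def S0eq[symmetric] by simp
  qed
  have A_eq: "(LINT t:ival a b|lborel. sqrt (h1 t * h2 t - (h3 t)\<^sup>2)) = omg H.phi UNIV"
    unfolding omg_def set_lebesgue_integral_def H.phi_def I_def[symmetric]
    by (rule Bochner_Integration.integral_cong) (auto simp: g1_def g2_def g3_def indicator_def)
  have T_eq: "trOmega h1 h2 (ival a b) = omg g1 UNIV + omg g2 UNIV"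
    unfolding trOmega_def I_def[symmetric] omgI g1_def g2_def ..
  have sd: "sqrt \<delta> = sqrt c / r" using rp cpos by (simp add: \<delta>_def real_sqrt_divide)
  have sc: "0 < sqrt c" using cpos by simp
  define A where "A = omg H.phi UNIV"
  define T where "T = omg g1 UNIV + omg g2 UNIV"
  define J where "J = (LINT t:C.S0|lborel. C.K t)"
  have m2: "A * ln 2 / sqrt \<delta> - ln (2 * T / sqrt \<delta>) \<le> J" and m3: "J \<le> 4 * sqrt (H.dO UNIV) / sqrt \<delta>"
    using main unfolding A_def T_def J_def by auto
  have l1: "A * ln 2 / sqrt \<delta> = A / sqrt c * ln 2 * r" unfolding sd using sc rp by (simp add: field_simps)
  have l2: "ln (2 * T / sqrt \<delta>) = ln r + ln (2 * T / sqrt c)"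
  proof -
    have "2 * T / sqrt \<delta> = r * (2 * T / sqrt c)" unfolding sd using sc rp by (simp add: field_simps)
    moreover have "0 < 2 * T / sqrt c" using Tpos sc unfolding T_def by simp
    moreover have "0 < T" using Tpos by (simp add: T_def)
    ultimately show ?thesis using rp cpos ln_mult[of r "2 * T / sqrt c"] by simp
  qed
  have l3: "4 * sqrt (H.dO UNIV) / sqrt \<delta> = 4 * sqrt (H.dO UNIV) / sqrt c * r"
    unfolding sd using sc rp by (simp add: field_simps)
  show "set_integrable lborel {t. that r \<le> t \<and> ereal t < b}
        (\<lambda>t. kernelH a b h1 h2 h3 c that shat t r) \<and>
      (LINT t:ival a b|lborel. sqrt (h1 t * h2 t - (h3 t)\<^sup>2)) / sqrt c * ln 2 * r
        - (ln r + ln (2 * trOmega h1 h2 (ival a b) / sqrt c))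
      \<le> (LINT t:{t. that r \<le> t \<and> ereal t < b}|lborel. kernelH a b h1 h2 h3 c that shat t r) \<and>
      (LINT t:{t. that r \<le> t \<and> ereal t < b}|lborel. kernelH a b h1 h2 h3 c that shat t r)
      \<le> 4 * sqrt (detOmega h1 h2 h3 (ival a b)) / sqrt c * r"
    unfolding int_eq A_eq T_eq DD J_def[symmetric] A_def[symmetric] T_def[symmetric]
    using sint m2 m3 l1 l2 l3 by simp
qed


end
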